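(* Let $\mathcal D=(D,<,\rho)$ be a computable partially ordered set. Let $c:\{0,1\}^*\times\{0,1\}^*\to\{0,1\}^*$ be a total computable injective map, and let $J:\mathbb N\times\mathbb N\to\mathbb N$ and $M\in\mathbb N$ be such that $|c(p,q)|\le J(|p|,|q|)+M$ for all $p,q\in\{0,1\}^*$. Then $$K^D\le_{ct}J(K^{\mathcal D}_{\min},K^{\mathcal D}_{\max}).$$ In particular (with the convention $\log(0)=0$), $K^D\le_{ct}(K^{\mathcal D}_{\max}+\log(K^{\mathcal D}_{\max}))+(K^{\mathcal D}_{\min}+\log(K^{\mathcal D}_{\min}))$.
   Context: A computable partially ordered set is a triple $\mathcal D=(D,<,\rho)$ where $\rho:\mathbb N\to D$ is a bijection and $<$ is a strict partial order on $D$ with $\{(m,n):\rho(m)<\rho(n)\}$ computable; partial computability of maps into $D$ is via $\rho^{-1}$. For a partial $f:\{0,1\}^*\times\mathbb N\to D$ monotone increasing in its second argument on its domain, $\max^{\mathcal D}f$ is the partial function defined exactly at those $p$ for which $\{f(p,t):t,\ f(p,t)\text{ defined}\}$ is finite and non-empty, with value its maximum element. $\mathrm{Max}_{\mathrm{PR}}[\{0,1\}^*\to\mathcal D]$ is the class of all $\max^{\mathcal D}f$ with $f$ partial computable and monotone increasing in its second argument. For partial $\varphi:\{0,1\}^*\to D$, $K_\varphi(d)=\min\{|p|:\varphi(p)=d\}$. $K^D$ is $K_\varphi$ for $\varphi$ optimal among partial computable functions $\{0,1\}^*\to D$ (i.e. for every partial computable $\psi$, $K_\varphi\le K_\psi+c$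 wherever $K_\psi$ is defined, for some constant $c$). $K^{\mathcal D}_{\max}$ is $K_U$ for some $U$ optimal in the same sense within $\mathrm{Max}_{\mathrm{PR}}[\{0,1\}^*\to\mathcal D]$; $K^{\mathcal D}_{\min}$ is $K^{\mathcal D'}_{\max}$ for the reverse order $\mathcal D'=(D,>,\rho)$. All are total functions $D\to\mathbb N$ defined up to an additive constant. $f\le_{ct}g$ iff $\exists c\,\forall d\ f(d)\le g(d)+c$. *)

theory Defs
  imports Complex_Main
begin

datatype recf = Z | S | Proj nat | Comp recf "recf list" | Prim recf recf | Mn recf

inductive eval :: "recf \<Rightarrow> nat list \<Rightarrow> nat \<Rightarrow> bool" where
  evZ: "eval Z xs 0"
| evS: "eval S (x # xs) (Suc x)"
| evProj: "i < length xs \<Longrightarrow> eval (Proj i) xs (xs ! i)"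
| evComp: "list_all2 (\<lambda>g y. eval g xs y) gs ys \<Longrightarrow> eval f ys z \<Longrightarrow> eval (Comp f gs) xs z"
| evPrim0: "eval f xs z \<Longrightarrow> eval (Prim f g) (0 # xs) z"
| evPrimS: "eval (Prim f g) (n # xs) y \<Longrightarrow> eval g (y # n # xs) z \<Longrightarrow> eval (Prim f g) (Suc n # xs) z"
| evMn: "eval g (z # xs) 0 \<Longrightarrow> (\<forall>i<z. \<exists>y. 0 < y \<and> eval g (i # xs) y) \<Longrightarrow> eval (Mn g) xs z"

section \<open>Binary strings {0,1}^* as bool lists, coded bijectively by naturals\<close>

fun enc :: "bool list \<Rightarrow> nat" where
  "enc [] = 0"
| "enc (b # bs) = 2 * enc bs + (if b then 2 else 1)"

text \<open>D is the type 'd, lt the strict order, rho the numbering.\<close>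
definition computable_poset :: "('d \<Rightarrow> 'd \<Rightarrow> bool) \<Rightarrow> (nat \<Rightarrow> 'd) \<Rightarrow> bool" where
  "computable_poset lt rho \<longleftrightarrow>
     bij rho \<and> (\<forall>x. \<not> lt x x) \<and> (\<forall>x y z. lt x y \<longrightarrow> lt y z \<longrightarrow> lt x z) \<and>
     (\<exists>r. \<forall>m n z. eval r [m, n] z \<longleftrightarrow> z = (if lt (rho m) (rho n) then 1 else 0))"

text \<open>Partial computable maps {0,1}^* -> D and {0,1}^* x N -> D (via rho^-1).\<close>
definition pc_str :: "(nat \<Rightarrow> 'd) \<Rightarrow> (bool list \<Rightarrow> 'd option) \<Rightarrow> bool" where
  "pc_str rho \<phi> \<longleftrightarrow> (\<exists>r. \<forall>p z. eval r [enc p] z \<longleftrightarrow> \<phi> p = Some (rho z))"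

definition pc_str_nat :: "(nat \<Rightarrow> 'd) \<Rightarrow> (bool list \<Rightarrow> nat \<Rightarrow> 'd option) \<Rightarrow> bool" where
  "pc_str_nat rho f \<longleftrightarrow> (\<exists>r. \<forall>p t z. eval r [enc p, t] z \<longleftrightarrow> f p t = Some (rho z))"

definition total_computable2 :: "(bool list \<Rightarrow> bool list \<Rightarrow> bool list) \<Rightarrow> bool" where
  "total_computable2 c \<longleftrightarrow> (\<exists>r. \<forall>p q z. eval r [enc p, enc q] z \<longleftrightarrow> z = enc (c p q))"

definition PC :: "(nat \<Rightarrow> 'd) \<Rightarrow> (bool list \<Rightarrow> 'd option) set" where
  "PC rho = {\<phi>. pc_str rho \<phi>}"

definition mono_incr :: "('d \<Rightarrow> 'd \<Rightarrow> bool) \<Rightarrow> (bool list \<Rightarrow> nat \<Rightarrow> 'd option) \<Rightarrow> bool" where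
  "mono_incr lt f \<longleftrightarrow> (\<forall>p t t' a b. t \<le> t' \<longrightarrow> f p t = Some a \<longrightarrow> f p t' = Some b \<longrightarrow> (a = b \<or> lt a b))"

definition maxD :: "('d \<Rightarrow> 'd \<Rightarrow> bool) \<Rightarrow> (bool list \<Rightarrow> nat \<Rightarrow> 'd option) \<Rightarrow> bool list \<Rightarrow> 'd option" where
  "maxD lt f p = (let V = {d. \<exists>t. f p t = Some d} in
     if finite V \<and> V \<noteq> {} then Some (THE d. d \<in> V \<and> (\<forall>e\<in>V. e = d \<or> lt e d)) else None)"

definition MaxPR :: "('d \<Rightarrow> 'd \<Rightarrow> bool) \<Rightarrow> (nat \<Rightarrow> 'd) \<Rightarrow> (bool list \<Rightarrow> 'd option) set" where
  "MaxPR lt rho = {maxD lt f | f. pc_str_nat rho f \<and> mono_incr lt f}"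

definition Kc :: "(bool list \<Rightarrow> 'd option) \<Rightarrow> 'd \<Rightarrow> nat option" where
  "Kc \<phi> d = (if \<exists>p. \<phi> p = Some d then Some (LEAST n. \<exists>p. \<phi> p = Some d \<and> length p = n) else None)"

definition optimal_in :: "(bool list \<Rightarrow> 'd option) set \<Rightarrow> (bool list \<Rightarrow> 'd option) \<Rightarrow> bool" where
  "optimal_in C \<phi> \<longleftrightarrow> \<phi> \<in> C \<and>
     (\<forall>\<psi>\<in>C. \<exists>c. \<forall>d k. Kc \<psi> d = Some k \<longrightarrow> (\<exists>k'. Kc \<phi> d = Some k' \<and> k' \<le> k + c))"

definition logz :: "nat \<Rightarrow> real" where
  "logz n = (if n = 0 then 0 else log 2 (real n))"

end

theory Submission
  imports Defs "HOL-Library.Nat_Bijection"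
begin


inductive_cases evZE: "eval Z xs z"
inductive_cases evSE: "eval S xs z"
inductive_cases evProjE: "eval (Proj i) xs z"
inductive_cases evCompE: "eval (Comp f gs) xs z"
inductive_cases evPrimE: "eval (Prim f g) xs z"
inductive_cases evMnE: "eval (Mn g) xs z"

lemma list_all2_unique:
  "list_all2 (\<lambda>g y. P g y \<and> (\<forall>x. P g x \<longrightarrow> y = x)) gs ys \<Longrightarrow> list_all2 P gs ys' \<Longrightarrow> ys' = ys"
proof (induction gs arbitrary: ys ys')
  case Nil then show ?case by simp
next
  case (Cons g gs) then show ?case by (auto simp: list_all2_Cons1)
qed

lemma eval_fun: "eval r xs z \<Longrightarrow> eval r xs z' \<Longrightarrow> z = z'"
proof (induction arbitrary: z' rule: eval.induct)
  case (evZ xs) then show ?case by (blast elim: evZE)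
next
  case (evS x xs) then show ?case by (blast elim: evSE)
next
  case (evProj i xs) then show ?case by (blast elim: evProjE)
next
  case (evComp xs gs ys f z)
  from evComp.prems obtain ys' where a: "list_all2 (\<lambda>g y. eval g xs y) gs ys'" and b: "eval f ys' z'"
    by (blast elim: evCompE)
  have "ys' = ys" using evComp.IH(1) a
    by (rule list_all2_unique)
  then show ?case using evComp.IH(2) b by simp
next
  case (evPrim0 f xs z g) then show ?case by (blast elim: evPrimE)
next
  case (evPrimS f g n xs y z)
  from evPrimS.prems obtain y' where "eval (Prim f g) (n # xs) y'" "eval g (y' # n # xs) z'"
    by (blast elim: evPrimE)
  then show ?case using evPrimS.IH by auto
next
  case (evMn g z xs)
  have ab: "eval g (z' # xs) 0 \<and> (\<forall>i<z'. \<exists>y>0. eval g (i # xs) y)"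
    using evMn.prems by (rule evMnE) simp
  then have a: "eval g (z' # xs) 0" and b: "\<forall>i<z'. \<exists>y>0. eval g (i # xs) y" by simp_all
  show ?case
  proof (rule linorder_cases[of z z'])
    assume "z < z'" then obtain y where "y > 0" "eval g (z#xs) y" using b by auto
    moreover have "0 = y" using evMn.IH(1) \<open>eval g (z#xs) y\<close> by blast
    ultimately show ?thesis by simp
  next
    assume "z' < z" then obtain y where "y > 0" "\<forall>y'. eval g (z'#xs) y' \<longrightarrow> y = y'"
      using evMn.IH(2) by blast
    then show ?thesis using a by (metis less_numeral_extra(3))
  qed
qed
definition rc :: "nat \<Rightarrow> (nat list \<Rightarrow> nat) \<Rightarrow> bool" where
  "rc n F \<longleftrightarrow> (\<exists>r. \<forall>xs. length xs = n \<longrightarrow> eval r xs (F xs))"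

lemma rc_cong: "rc n F \<Longrightarrow> (\<And>xs. length xs = n \<Longrightarrow> F xs = G xs) \<Longrightarrow> rc n G"
  unfolding rc_def by metis

lemma rc_const: "rc n (\<lambda>xs. k)"
proof -
  have "\<exists>r. \<forall>xs. eval r xs k"
  proof (induction k)
    case 0 then show ?case by (auto intro: evZ)
  next
    case (Suc k) then obtain r where "\<forall>xs. eval r xs k" by auto
    then have "\<forall>xs. eval (Comp S [r]) xs (Suc k)"
      by (intro allI evComp[where ys="[k]"]) (auto intro: evS)
    then show ?case by blast
  qed
  then show ?thesis unfolding rc_def by blast
qed

lemma rc_proj: "i < n \<Longrightarrow> rc n (\<lambda>xs. xs ! i)"
  unfolding rc_def by (auto intro!: exI[of _ "Proj i"] evProj)

lemma choice_list: "\<forall>G\<in>set Gs. \<exists>r. P G r \<Longrightarrow> \<exists>rs. list_all2 P Gs rs"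
proof (induction Gs)
  case Nil then show ?case by simp
next
  case (Cons G Gs)
  then obtain rs where "list_all2 P Gs rs" by auto
  moreover obtain r where "P G r" using Cons.prems by auto
  ultimately have "list_all2 P (G # Gs) (r # rs)" by simp
  then show ?case by blast
qed

lemma rc_comp: "rc (length Gs) F \<Longrightarrow> \<forall>G\<in>set Gs. rc n G \<Longrightarrow> rc n (\<lambda>xs. F (map (\<lambda>G. G xs) Gs))"
proof -
  assume F: "rc (length Gs) F" and G: "\<forall>G\<in>set Gs. rc n G"
  obtain rf where rf: "\<forall>ys. length ys = length Gs \<longrightarrow> eval rf ys (F ys)" using F rc_def by auto
  obtain rs where rs: "list_all2 (\<lambda>G r. \<forall>xs. length xs = n \<longrightarrow> eval r xs (G xs)) Gs rs"
    using choice_list[of Gs "\<lambda>G r. \<forall>xs. length xs = n \<longrightarrow> eval r xs (G xs)"] G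
    unfolding rc_def by blast
  have "\<forall>xs. length xs = n \<longrightarrow> eval (Comp rf rs) xs (F (map (\<lambda>G. G xs) Gs))"
  proof (intro allI impI)
    fix xs :: "nat list" assume l: "length xs = n"
    have "list_all2 (\<lambda>g y. eval g xs y) rs (map (\<lambda>G. G xs) Gs)"
      using rs by (induction rule: list_all2_induct) (simp_all add: l)
    moreover have "eval rf (map (\<lambda>G. G xs) Gs) (F (map (\<lambda>G. G xs) Gs))" by (simp add: rf)
    ultimately show "eval (Comp rf rs) xs (F (map (\<lambda>G. G xs) Gs))" by (rule evComp)
  qed
  then show ?thesis unfolding rc_def by blast
qed

lemma rc_comp1: "rc 1 F \<Longrightarrow> rc n G \<Longrightarrow> rc n (\<lambda>xs. F [G xs])"
  using rc_comp[of "[G]" F n] by simp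
lemma rc_comp2: "rc 2 F \<Longrightarrow> rc n G \<Longrightarrow> rc n H \<Longrightarrow> rc n (\<lambda>xs. F [G xs, H xs])"
  using rc_comp[of "[G,H]" F n] by (simp add: numeral_2_eq_2)
lemma rc_comp3: "rc 3 F \<Longrightarrow> rc n G \<Longrightarrow> rc n H \<Longrightarrow> rc n K \<Longrightarrow> rc n (\<lambda>xs. F [G xs, H xs, K xs])"
  using rc_comp[of "[G,H,K]" F n] by (simp add: numeral_3_eq_3)

lemma rc_prim:
  assumes "rc n F" "rc (Suc (Suc n)) G"
  shows "rc (Suc n) (\<lambda>xs. rec_nat (F (tl xs)) (\<lambda>k y. G (y # k # tl xs)) (hd xs))"
proof -
  obtain rf where rf: "\<forall>xs. length xs = n \<longrightarrow> eval rf xs (F xs)" using assms(1) rc_def by auto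
  obtain rg where rg: "\<forall>xs. length xs = Suc (Suc n) \<longrightarrow> eval rg xs (G xs)" using assms(2) rc_def by auto
  have "eval (Prim rf rg) (k # xs) (rec_nat (F xs) (\<lambda>k y. G (y # k # xs)) k)" if "length xs = n" for k xs
  proof (induction k)
    case 0 show ?case using that rf by (simp add: evPrim0)
  next
    case (Suc k) show ?case using that rg by (simp add: evPrimS[OF Suc])
  qed
  then have "\<forall>xs. length xs = Suc n \<longrightarrow> eval (Prim rf rg) xs (rec_nat (F (tl xs)) (\<lambda>k y. G (y # k # tl xs)) (hd xs))"
    by (metis length_Suc_conv list.sel(1,3))
  then show ?thesis unfolding rc_def by blast
qed

lemma rc_mn:
  assumes "rc (Suc n) G"
  shows "\<exists>r. \<forall>xs z. length xs = n \<longrightarrow> (eval r xs z \<longleftrightarrow> G (z # xs) = 0 \<and> (\<forall>i<z. G (i # xs) \<noteq> 0))"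
proof -
  obtain rg where rg: "\<forall>xs. length xs = Suc n \<longrightarrow> eval rg xs (G xs)" using assms rc_def by auto
  have "eval (Mn rg) xs z \<longleftrightarrow> G (z # xs) = 0 \<and> (\<forall>i<z. G (i # xs) \<noteq> 0)" if "length xs = n" for xs z
  proof
    assume "eval (Mn rg) xs z"
    then have a: "eval rg (z # xs) 0" and b: "\<forall>i<z. \<exists>y>0. eval rg (i # xs) y" by (auto elim: eval.cases)
    have "G (z # xs) = 0" using eval_fun[OF a rg[rule_format, of "z#xs"]] that by simp
    moreover have "\<forall>i<z. G (i # xs) \<noteq> 0"
    proof (intro allI impI)
      fix i assume "i < z" then obtain y where "y > 0" "eval rg (i # xs) y" using b by blast
      then show "G (i # xs) \<noteq> 0" using eval_fun[OF _ rg[rule_format, of "i#xs"]] that by fastforce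
    qed
    ultimately show "G (z # xs) = 0 \<and> (\<forall>i<z. G (i # xs) \<noteq> 0)" by simp
  next
    assume "G (z # xs) = 0 \<and> (\<forall>i<z. G (i # xs) \<noteq> 0)"
    then show "eval (Mn rg) xs z" using rg that
      by (intro evMn) (metis length_Cons, metis length_Cons neq0_conv)
  qed
  then show ?thesis by blast
qed


lemma nth_Cons_1[simp]: "(x # xs) ! 1 = xs ! 0" by simp
lemma nth_Cons_num[simp]: "(x # xs) ! numeral k = xs ! (numeral k - 1)" by (simp add: nth_Cons')
lemma map_nth_tl: "length xs = Suc m \<Longrightarrow> map (\<lambda>i. xs ! Suc i) [0..<m] = tl xs"
  by (cases xs) (auto intro: nth_equalityI)

lemma rc_Suc1: "rc 1 (\<lambda>l. Suc (l!0))"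
  unfolding rc_def
  by (rule exI[of _ S]) (metis One_nat_def evS length_0_conv length_Suc_conv nth_Cons_0)

lemma len1: "length xs = Suc 0 \<Longrightarrow> xs = [xs!0]"
  by (cases xs) auto
lemma len2: "length xs = 2 \<Longrightarrow> xs = [xs!0, xs!1]"
  by (cases xs; cases "tl xs") (auto simp: numeral_2_eq_2)
lemma len3: "length xs = 3 \<Longrightarrow> xs = [xs!0, xs!1, xs!2]"
  by (cases xs; cases "tl xs"; cases "tl (tl xs)") (auto simp: numeral_3_eq_3)

lemma rc_prim1: assumes "rc 0 F" "rc 2 G" shows "rc 1 (\<lambda>l. rec_nat (F []) (\<lambda>k y. G [y, k]) (l!0))"
proof -
  have "rc 1 (\<lambda>xs. rec_nat (F (tl xs)) (\<lambda>k y. G (y # k # tl xs)) (hd xs))"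
    using rc_prim[of 0 F G] assms by (simp add: numeral_2_eq_2)
  then show ?thesis by (rule rc_cong) (auto simp: length_Suc_conv)
qed

lemma rc_prim2: assumes "rc 1 F" "rc 3 G" shows "rc 2 (\<lambda>l. rec_nat (F [l!1]) (\<lambda>k y. G [y, k, l!1]) (l!0))"
proof -
  have "rc 2 (\<lambda>xs. rec_nat (F (tl xs)) (\<lambda>k y. G (y # k # tl xs)) (hd xs))"
    using rc_prim[of 1 F G] assms by (simp add: eval_nat_numeral)
  then show ?thesis by (rule rc_cong) (auto simp: length_Suc_conv numeral_2_eq_2)
qed

lemma rc_prim3: assumes "rc 2 F" "rc 4 G" shows "rc 3 (\<lambda>l. rec_nat (F [l!1, l!2]) (\<lambda>k y. G [y, k, l!1, l!2]) (l!0))"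
proof -
  have "rc 3 (\<lambda>xs. rec_nat (F (tl xs)) (\<lambda>k y. G (y # k # tl xs)) (hd xs))"
    using rc_prim[of 2 F G] assms by (simp add: numeral_3_eq_3 numeral_2_eq_2 eval_nat_numeral)
  then show ?thesis by (rule rc_cong) (auto simp: length_Suc_conv numeral_3_eq_3)
qed


lemma rc_Suc: assumes "rc n F" shows "rc n (\<lambda>xs. Suc (F xs))"
  using rc_comp1[OF rc_Suc1 assms] by simp

lemma rc_add0: "rc 2 (\<lambda>l. l!0 + l!1)"
proof -
  have "rc 2 (\<lambda>l. rec_nat ((\<lambda>l. l!0) [l!1]) (\<lambda>k y. (\<lambda>l. Suc (l!0)) [y, k, l!1]) (l!0))"
    by (rule rc_prim2) (rule rc_proj, simp, rule rc_Suc, rule rc_proj, simp)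
  moreover have eq: "rec_nat b (\<lambda>k y. Suc y) a = a + b" for a b :: nat by (induction a) auto
  then show ?thesis using calculation(1) by (auto elim!: rc_cong)
qed

lemma rc_mult0: "rc 2 (\<lambda>l. l!0 * l!1)"
proof -
  have "rc 2 (\<lambda>l. rec_nat ((\<lambda>l. 0) [l!1]) (\<lambda>k y. (\<lambda>l. l!0 + l!2) [y, k, l!1]) (l!0))"
    by (rule rc_prim2) (auto intro: rc_const rc_cong[OF rc_comp2[OF rc_add0 rc_proj rc_proj, of 0 3 2]])
  moreover have eq: "rec_nat 0 (\<lambda>k y. y + b) a = a * b" for a b :: nat by (induction a) auto
  then show ?thesis using calculation(1) by (auto elim!: rc_cong)
qed

lemma rc_pred0: "rc 1 (\<lambda>l. l!0 - 1)"
proof -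
  have "rc 1 (\<lambda>l. rec_nat ((\<lambda>l. 0) []) (\<lambda>k y. (\<lambda>l. l!1) [y, k]) (l!0))"
    by (rule rc_prim1) (auto intro: rc_const rc_proj)
  moreover have eq: "rec_nat 0 (\<lambda>k y. k) a = a - 1" for a :: nat by (induction a) auto
  then show ?thesis using calculation(1) by (auto elim!: rc_cong)
qed

lemma rc_pred: assumes "rc n F" shows "rc n (\<lambda>xs. F xs - 1)"
  using rc_comp1[OF rc_pred0 assms] by simp

lemma rc_sub0: "rc 2 (\<lambda>l. l!1 - l!0)"
proof -
  have "rc 2 (\<lambda>l. rec_nat ((\<lambda>l. l!0) [l!1]) (\<lambda>k y. (\<lambda>l. l!0 - 1) [y, k, l!1]) (l!0))"
    by (rule rc_prim2) (rule rc_proj, simp, rule rc_pred, rule rc_proj, simp)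
  moreover have eq: "rec_nat b (\<lambda>k y. y - 1) a = b - a" for a b :: nat by (induction a) auto
  then show ?thesis using calculation(1) by (auto elim!: rc_cong)
qed

lemma rc_ifz0: "rc 3 (\<lambda>l. if l!0 = 0 then l!1 else l!2)"
proof -
  have "rc 3 (\<lambda>l. rec_nat ((\<lambda>l. l!0) [l!1, l!2]) (\<lambda>k y. (\<lambda>l. l!3) [y, k, l!1, l!2]) (l!0))"
    by (rule rc_prim3) (auto intro: rc_proj)
  moreover have eq: "rec_nat b (\<lambda>k y. c) a = (if a = 0 then b else c)" for a b c :: nat by (cases a) auto
  then show ?thesis using calculation(1) by (auto elim!: rc_cong)
qed

lemma rc_pow0: "rc 1 (\<lambda>l. 2 ^ (l!0))"
proof -
  have "rc 1 (\<lambda>l. rec_nat ((\<lambda>l. 1) []) (\<lambda>k y. (\<lambda>l. l!0 + l!0) [y, k]) (l!0))"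
    by (rule rc_prim1) (auto intro: rc_const rc_cong[OF rc_comp2[OF rc_add0 rc_proj rc_proj, of 0 2 0]])
  moreover have eq: "rec_nat 1 (\<lambda>k y. y + y) a = (2::nat) ^ a" for a :: nat by (induction a) auto
  then show ?thesis using calculation(1) by (auto elim!: rc_cong)
qed

lemma rc_add: assumes "rc n F" "rc n G" shows "rc n (\<lambda>xs. F xs + G xs)"
  using rc_comp2[OF rc_add0 assms] by simp
lemma rc_mult: assumes "rc n F" "rc n G" shows "rc n (\<lambda>xs. F xs * G xs)"
  using rc_comp2[OF rc_mult0 assms] by simp
lemma rc_sub: assumes "rc n F" "rc n G" shows "rc n (\<lambda>xs. F xs - G xs)"
  using rc_comp2[OF rc_sub0 assms(2,1)] by simp
lemma rc_pow: assumes "rc n F" shows "rc n (\<lambda>xs. 2 ^ F xs)"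
  using rc_comp1[OF rc_pow0 assms] by simp
lemma rc_ifz: assumes "rc n C" "rc n A" "rc n B" shows "rc n (\<lambda>xs. if C xs = 0 then A xs else B xs)"
  using rc_comp3[OF rc_ifz0 assms] by (simp cong: if_cong)
lemma rc_ifle: assumes "rc n F" "rc n G" "rc n A" "rc n B" shows "rc n (\<lambda>xs. if F xs \<le> G xs then A xs else B xs)"
  using rc_ifz[OF rc_sub[OF assms(1,2)] assms(3,4)] by simp
lemma rc_ifeq: "rc n F \<Longrightarrow> rc n G \<Longrightarrow> rc n A \<Longrightarrow> rc n B \<Longrightarrow> rc n (\<lambda>xs. if F xs = G xs then A xs else B xs)"
proof -
  assume a: "rc n F" "rc n G" "rc n A" "rc n B"
  have "rc n (\<lambda>xs. if (F xs - G xs) + (G xs - F xs) = 0 then A xs else B xs)"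
    by (intro rc_ifz rc_add rc_sub a)
  then show ?thesis by (rule rc_cong) auto
qed
lemma rc_min: "rc n F \<Longrightarrow> rc n G \<Longrightarrow> rc n (\<lambda>xs. min (F xs) (G xs))"
  by (rule rc_cong[OF rc_ifle[of n F G F G]]) (auto simp: min_def)

lemma rc_tl: "rc (Suc n) F \<Longrightarrow> rc (Suc (Suc n)) (\<lambda>l. F (tl l))"
proof -
  assume a: "rc (Suc n) F"
  have "rc (Suc (Suc n)) (\<lambda>l. F (map (\<lambda>G. G l) (map (\<lambda>i l. l ! Suc i) [0..<Suc n])))"
    by (rule rc_comp) (auto simp: a intro!: rc_proj)
  then show ?thesis by (rule rc_cong) (simp add: o_def map_nth_tl del: upt_Suc)
qed

lemma rc_cons: "rc (Suc n) H \<Longrightarrow> rc n B \<Longrightarrow> rc n (\<lambda>xs. H (B xs # xs))"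
proof -
  assume a: "rc (Suc n) H" "rc n B"
  have "rc n (\<lambda>xs. H (map (\<lambda>G. G xs) (B # map (\<lambda>i l. l ! i) [0..<n])))"
    by (rule rc_comp) (auto simp: a intro!: rc_proj)
  then show ?thesis by (rule rc_cong) (auto simp: o_def map_nth simp del: upt_Suc)
qed

definition bmin :: "nat \<Rightarrow> (nat \<Rightarrow> bool) \<Rightarrow> nat" where
  "bmin b P = (if \<exists>i<b. P i then LEAST i. P i else b)"

lemma bmin_0: "bmin 0 P = 0" by (simp add: bmin_def)
lemma bmin_Suc: "bmin (Suc k) P = (if k \<le> bmin k P then (if P k then k else Suc k) else bmin k P)"
proof (cases "\<exists>i<k. P i")
  case True
  then have "(LEAST i. P i) < k" by (meson LeastI less_le_trans not_less_Least not_less)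
  then show ?thesis using True by (auto simp: bmin_def less_Suc_eq)
next
  case False
  show ?thesis
  proof (cases "P k")
    case True
    have l: "(LEAST i. P i) = k"
    proof (rule Least_equality)
      show "P k" by fact
    next
      fix y assume "P y" then show "k \<le> y" using False not_le by blast
    qed
    have b1: "bmin k P = k" unfolding bmin_def by (rule if_not_P[OF False])
    have "bmin (Suc k) P = k" unfolding bmin_def using True l by auto
    then show ?thesis using b1 True by simp
  next
    case F2: False
    have b1: "bmin k P = k" unfolding bmin_def by (rule if_not_P[OF False])
    have "\<not> (\<exists>i<Suc k. P i)" using False F2 less_Suc_eq by blast
    then have "bmin (Suc k) P = Suc k" unfolding bmin_def by (rule if_not_P)
    then show ?thesis using b1 F2 by simp
  qed
qed

lemma bmin_rec: "rec_nat 0 (\<lambda>k y. if k \<le> y then (if P k then k else Suc k) else y) m = bmin m P"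
  by (induction m) (simp_all add: bmin_0 bmin_Suc)

lemma rc_bmin: "rc (Suc n) F \<Longrightarrow> rc n B \<Longrightarrow> rc n (\<lambda>xs. bmin (B xs) (\<lambda>i. F (i # xs) = 0))"
proof -
  assume a: "rc (Suc n) F" "rc n B"
  have "rc (Suc (Suc n)) (\<lambda>l. if l!1 \<le> l!0 then (if F (tl l) = 0 then l!1 else Suc (l!1)) else l!0)"
    by (intro rc_ifle rc_ifz rc_proj rc_Suc rc_tl a) auto
  then have "rc (Suc n) (\<lambda>xs. rec_nat 0 (\<lambda>k y. (\<lambda>l. if l!1 \<le> l!0 then (if F (tl l) = 0 then l!1 else Suc (l!1)) else l!0) (y # k # tl xs)) (hd xs))"
    by (intro rc_prim[of n "\<lambda>_. 0"] rc_const)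
  then have "rc (Suc n) (\<lambda>xs. bmin (hd xs) (\<lambda>i. F (i # tl xs) = 0))"
  proof (rule rc_cong)
    fix xs :: "nat list"
    show "rec_nat 0 (\<lambda>k y. (\<lambda>l. if l!1 \<le> l!0 then (if F (tl l) = 0 then l!1 else Suc (l!1)) else l!0) (y # k # tl xs)) (hd xs)
       = bmin (hd xs) (\<lambda>i. F (i # tl xs) = 0)"
      using bmin_rec[of "\<lambda>i. F (i # tl xs) = 0" "hd xs"] by (simp cong: if_cong)
  qed
  from rc_cons[OF this a(2)] show ?thesis by simp
qed


definition allpos :: "nat list \<Rightarrow> bool" where "allpos ys \<longleftrightarrow> (\<forall>y\<in>set ys. y \<noteq> 0)"

definition mnb :: "(nat \<Rightarrow> nat) \<Rightarrow> nat \<Rightarrow> nat" where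
  "mnb h s = (if bmin s (\<lambda>i. h i \<le> 1) < s \<and> h (bmin s (\<lambda>i. h i \<le> 1)) = 1
      then Suc (bmin s (\<lambda>i. h i \<le> 1)) else 0)"

definition primb :: "nat \<Rightarrow> (nat \<Rightarrow> nat \<Rightarrow> nat) \<Rightarrow> nat \<Rightarrow> nat" where
  "primb u h k = rec_nat u (\<lambda>j y. if y = 0 then 0 else h j (y - 1)) k"

lemma primb_0[simp]: "primb u h 0 = u" by (simp add: primb_def)
lemma primb_Suc[simp]: "primb u h (Suc k) = (if primb u h k = 0 then 0 else h k (primb u h k - 1))"
  by (simp add: primb_def)

fun bnd :: "recf \<Rightarrow> nat \<Rightarrow> nat list \<Rightarrow> nat" where
  "bnd Z s xs = 1"
| "bnd S s xs = (case xs of [] \<Rightarrow> 0 | x # _ \<Rightarrow> Suc (Suc x))"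
| "bnd (Proj i) s xs = (if i < length xs then Suc (xs ! i) else 0)"
| "bnd (Comp f gs) s xs = (if allpos (map (\<lambda>g. bnd g s xs) gs)
      then bnd f s (map (\<lambda>g. bnd g s xs - 1) gs) else 0)"
| "bnd (Prim f g) s xs = (case xs of [] \<Rightarrow> 0 | k # ys \<Rightarrow>
      primb (bnd f s ys) (\<lambda>j y. bnd g s (y # j # ys)) k)"
| "bnd (Mn g) s xs = mnb (\<lambda>i. bnd g s (i # xs)) s"

lemma bmin_lt: assumes "bmin b P < b" shows "P (bmin b P) \<and> (\<forall>j<bmin b P. \<not> P j)"
proof -
  have ex: "\<exists>i<b. P i"
  proof (rule ccontr)
    assume "\<not> (\<exists>i<b. P i)" then have "bmin b P = b" unfolding bmin_def by (rule if_not_P)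
    with assms show False by simp
  qed
  then have e: "bmin b P = (LEAST i. P i)" unfolding bmin_def by (rule if_P)
  from ex obtain i where "P i" by blast
  then have "P (LEAST i. P i)" by (rule LeastI)
  moreover have "\<forall>j<(LEAST i. P i). \<not> P j" using not_less_Least by blast
  ultimately show ?thesis unfolding e by blast
qed

lemma bmin_eqI: assumes "i < b" "P i" "\<forall>j<i. \<not> P j" shows "bmin b P = i"
proof -
  have ex: "\<exists>i<b. P i" using assms by blast
  then have e: "bmin b P = (LEAST i. P i)" unfolding bmin_def by (rule if_P)
  have "(LEAST i. P i) = i"
  proof (rule Least_equality)
    show "P i" by fact
  next
    fix y assume "P y" then show "i \<le> y" using assms(3) not_le by blast
  qed
  then show ?thesis using e by simp
qed

lemma mnb_Suc: assumes "mnb h s = Suc z" shows "z < s" "h z = 1" "\<forall>j<z. h j > 1"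
proof -
  define i where "i = bmin s (\<lambda>i. h i \<le> 1)"
  have c: "i < s \<and> h i = 1"
  proof (rule ccontr)
    assume "\<not> (i < s \<and> h i = 1)"
    then have "mnb h s = 0" unfolding mnb_def i_def[symmetric] by (rule if_not_P)
    with assms show False by simp
  qed
  have "mnb h s = Suc i" unfolding mnb_def i_def[symmetric] using c by (rule if_P)
  then have z: "z = i" using assms by simp
  show "z < s" "h z = 1" using c unfolding z by simp_all
  have bl: "\<forall>j<i. \<not> h j \<le> 1" using bmin_lt[of s "\<lambda>i. h i \<le> 1"] c unfolding i_def by blast
  show "\<forall>j<z. h j > 1"
  proof (intro allI impI)
    fix j assume "j < z"
    then have "\<not> h j \<le> 1" using bl unfolding z by blast
    then show "h j > 1" by simp
  qed
qed

lemma mnb_I: assumes "z < s" "h z = 1" "\<forall>j<z. h j > 1" shows "mnb h s = Suc z"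
proof -
  have "\<forall>j<z. \<not> h j \<le> 1" using assms(3) by (simp add: not_le)
  then have b: "bmin s (\<lambda>i. h i \<le> 1) = z" using assms(1,2) by (intro bmin_eqI) simp_all
  show ?thesis unfolding mnb_def b using assms(1,2) by simp
qed

lemma bnd_sound: "bnd r s xs = Suc z \<Longrightarrow> eval r xs z"
proof (induction r arbitrary: xs z)
  case Z then show ?case by (auto intro: evZ)
next
  case S then show ?case by (auto intro: evS split: list.splits)
next
  case (Proj i) then show ?case by (auto intro: evProj split: if_splits)
next
  case (Comp f gs)
  have eq: "(if allpos (map (\<lambda>g. bnd g s xs) gs) then bnd f s (map (\<lambda>g. bnd g s xs - 1) gs) else 0) = Suc z"
    using Comp.prems by (simp only: bnd.simps(4))
  have nz: "allpos (map (\<lambda>g. bnd g s xs) gs)"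
  proof (rule ccontr)
    assume "\<not> allpos (map (\<lambda>g. bnd g s xs) gs)"
    with eq show False by simp
  qed
  then have nz': "\<forall>g\<in>set gs. bnd g s xs \<noteq> 0" unfolding allpos_def by simp
  from eq nz have "bnd f s (map (\<lambda>g. bnd g s xs - 1) gs) = Suc z" by simp
  then have ef: "eval f (map (\<lambda>g. bnd g s xs - 1) gs) z" by (rule Comp.IH(1))
  have "list_all2 (\<lambda>g y. eval g xs y) gs (map (\<lambda>g. bnd g s xs - 1) gs)"
  proof (unfold list_all2_conv_all_nth, intro conjI allI impI)
    fix i assume i: "i < length gs"
    then have "gs ! i \<in> set gs" by simp
    moreover then have "bnd (gs ! i) s xs = Suc (bnd (gs ! i) s xs - 1)" using nz' by simp
    ultimately have "eval (gs ! i) xs (bnd (gs ! i) s xs - 1)" by (rule Comp.IH(2))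
    then show "eval (gs ! i) xs (map (\<lambda>g. bnd g s xs - 1) gs ! i)" using i by simp
  qed simp
  then show ?case using ef by (rule evComp)
next
  case (Prim f g)
  then obtain k ys where xs: "xs = k # ys" by (cases xs) auto
  have key: "primb (bnd f s ys) (\<lambda>j y. bnd g s (y # j # ys)) k = Suc z
        \<Longrightarrow> eval (Prim f g) (k # ys) z" for z
  proof (induction k arbitrary: z)
    case 0 then have "bnd f s ys = Suc z" by simp
    then show ?case by (intro evPrim0 Prim.IH(1))
  next
    case (Suc k)
    let ?y = "primb (bnd f s ys) (\<lambda>j y. bnd g s (y # j # ys)) k"
    from Suc.prems have nz: "?y \<noteq> 0" by (cases "?y = 0") simp_all
    then have "eval (Prim f g) (k # ys) (?y - 1)" by (intro Suc.IH) simp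
    moreover have "bnd g s ((?y - 1) # k # ys) = Suc z" using Suc.prems nz by simp
    then have "eval g ((?y - 1) # k # ys) z" by (rule Prim.IH(2))
    ultimately show ?case by (rule evPrimS)
  qed
  have "primb (bnd f s ys) (\<lambda>j y. bnd g s (y # j # ys)) k = Suc z"
    using Prim.prems unfolding xs by (simp only: bnd.simps list.case)
  then show ?case unfolding xs by (rule key)
next
  case (Mn g)
  have m: "mnb (\<lambda>i. bnd g s (i # xs)) s = Suc z" using Mn.prems by simp
  note mm = mnb_Suc[OF m]
  have "eval g (z # xs) 0" using mm(2) by (intro Mn.IH) simp
  moreover have "\<forall>j<z. \<exists>y>0. eval g (j # xs) y"
  proof (intro allI impI)
    fix j assume "j < z"
    then have "bnd g s (j # xs) > 1" using mm(3) by simp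
    then have "bnd g s (j # xs) = Suc (bnd g s (j # xs) - 1)" "bnd g s (j # xs) - 1 > 0" by auto
    then have "eval g (j # xs) (bnd g s (j # xs) - 1)" using Mn.IH by simp
    then show "\<exists>y>0. eval g (j # xs) y" using \<open>bnd g s (j # xs) - 1 > 0\<close> by blast
  qed
  ultimately show ?case by (rule evMn)
qed


lemma bnd_mono: "bnd r s xs = Suc z \<Longrightarrow> s \<le> s' \<Longrightarrow> bnd r s' xs = Suc z"
proof (induction r arbitrary: xs z)
  case Z then show ?case by simp
next
  case S then show ?case by simp
next
  case (Proj i) then show ?case by simp
next
  case (Comp f gs)
  have eq: "(if allpos (map (\<lambda>g. bnd g s xs) gs) then bnd f s (map (\<lambda>g. bnd g s xs - 1) gs) else 0) = Suc z"
    using Comp.prems(1) by (simp only: bnd.simps(4))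
  have nz: "allpos (map (\<lambda>g. bnd g s xs) gs)"
  proof (rule ccontr)
    assume "\<not> allpos (map (\<lambda>g. bnd g s xs) gs)"
    with eq show False by simp
  qed
  then have nz': "\<forall>g\<in>set gs. bnd g s xs \<noteq> 0" unfolding allpos_def by simp
  from eq nz have ef: "bnd f s (map (\<lambda>g. bnd g s xs - 1) gs) = Suc z" by simp
  have same: "map (\<lambda>g. bnd g s' xs) gs = map (\<lambda>g. bnd g s xs) gs"
  proof (rule map_cong[OF refl])
    fix g assume g: "g \<in> set gs"
    then have "bnd g s xs = Suc (bnd g s xs - 1)" using nz' by simp
    then have "bnd g s' xs = Suc (bnd g s xs - 1)" by (rule Comp.IH(2)[OF g _ Comp.prems(2)])
    then show "bnd g s' xs = bnd g s xs" using \<open>bnd g s xs = Suc (bnd g s xs - 1)\<close> by simp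
  qed
  have same': "map (\<lambda>g. bnd g s' xs - 1) gs = map (\<lambda>g. bnd g s xs - 1) gs"
    using same by (simp add: map_eq_conv)
  have "bnd f s' (map (\<lambda>g. bnd g s xs - 1) gs) = Suc z" using Comp.IH(1)[OF ef Comp.prems(2)] .
  then show ?case using nz by (simp only: bnd.simps(4) same same' if_True)
next
  case (Prim f g)
  then obtain k ys where xs: "xs = k # ys" by (cases xs) auto
  have key: "primb (bnd f s ys) (\<lambda>j y. bnd g s (y # j # ys)) k = Suc z
        \<Longrightarrow> primb (bnd f s' ys) (\<lambda>j y. bnd g s' (y # j # ys)) k = Suc z" for z
  proof (induction k arbitrary: z)
    case 0 then have "bnd f s ys = Suc z" by simp
    then show ?case using Prim.IH(1)[OF _ Prim.prems(2)] by simp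
  next
    case (Suc k)
    let ?y = "primb (bnd f s ys) (\<lambda>j y. bnd g s (y # j # ys)) k"
    from Suc.prems have nz: "?y \<noteq> 0" by (cases "?y = 0") simp_all
    then have y: "?y = Suc (?y - 1)" by simp
    have y': "primb (bnd f s' ys) (\<lambda>j y. bnd g s' (y # j # ys)) k = ?y" using Suc.IH[OF y] y by simp
    have "bnd g s ((?y - 1) # k # ys) = Suc z" using Suc.prems nz by simp
    then have "bnd g s' ((?y - 1) # k # ys) = Suc z" by (rule Prim.IH(2)[OF _ Prim.prems(2)])
    then show ?case using y' nz by simp
  qed
  have "primb (bnd f s ys) (\<lambda>j y. bnd g s (y # j # ys)) k = Suc z"
    using Prim.prems(1) unfolding xs by (simp only: bnd.simps list.case)
  then have "primb (bnd f s' ys) (\<lambda>j y. bnd g s' (y # j # ys)) k = Suc z" by (rule key)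
  then show ?case unfolding xs by (simp only: bnd.simps list.case)
next
  case (Mn g)
  have m: "mnb (\<lambda>i. bnd g s (i # xs)) s = Suc z" using Mn.prems(1) by simp
  note mm = mnb_Suc[OF m]
  have "mnb (\<lambda>i. bnd g s' (i # xs)) s' = Suc z"
  proof (rule mnb_I)
    show "z < s'" using mm(1) Mn.prems(2) by simp
    have "bnd g s (z # xs) = Suc 0" using mm(2) by simp
    then show "bnd g s' (z # xs) = 1" using Mn.IH[OF _ Mn.prems(2)] by simp
    show "\<forall>j<z. bnd g s' (j # xs) > 1"
    proof (intro allI impI)
      fix j assume j: "j < z"
      then have "bnd g s (j # xs) > 1" using mm(3) by simp
      then have e: "bnd g s (j # xs) = Suc (bnd g s (j # xs) - 1)" by simp
      have "bnd g s' (j # xs) = Suc (bnd g s (j # xs) - 1)" by (rule Mn.IH[OF e Mn.prems(2)])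
      then have "bnd g s' (j # xs) = bnd g s (j # xs)" using e by simp
      then show "bnd g s' (j # xs) > 1" using \<open>bnd g s (j # xs) > 1\<close> by simp
    qed
  qed
  then show ?case by simp
qed

lemma common_fuel_list:
  "list_all2 (\<lambda>g y. \<exists>s. bnd g s xs = Suc y) gs ys \<Longrightarrow> \<exists>s. \<forall>s'\<ge>s. map (\<lambda>g. bnd g s' xs) gs = map Suc ys"
proof (induction rule: list_all2_induct)
  case Nil then show ?case by simp
next
  case (Cons g gs y ys)
  from Cons.hyps(1) obtain s1 where s1: "bnd g s1 xs = Suc y" by blast
  from Cons.IH obtain s2 where s2: "\<forall>s'\<ge>s2. map (\<lambda>g. bnd g s' xs) gs = map Suc ys" by blast
  have "\<forall>s'\<ge>max s1 s2. map (\<lambda>g. bnd g s' xs) (g # gs) = map Suc (y # ys)"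
  proof (intro allI impI)
    fix s'
    assume le: "max s1 s2 \<le> s'"
    have l1: "s1 \<le> s'" using le by simp
    have l2: "s2 \<le> s'" using le by simp
    have "bnd g s' xs = Suc y" using bnd_mono[OF s1 l1] .
    moreover have "map (\<lambda>g. bnd g s' xs) gs = map Suc ys" using s2 l2 by simp
    ultimately show "map (\<lambda>g. bnd g s' xs) (g # gs) = map Suc (y # ys)" by simp
  qed
  then show ?case by blast
qed

lemma common_fuel_nat: "\<forall>i<(z::nat). \<exists>s::nat. \<forall>s'\<ge>s. P s' i \<Longrightarrow> \<exists>s. \<forall>s'\<ge>s. \<forall>i<z. P s' i"
proof (induction z)
  case 0 then show ?case by simp
next
  case (Suc z)
  have pz: "\<forall>i<z. \<exists>s. \<forall>s'\<ge>s. P s' i"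
  proof (intro allI impI)
    fix i assume "i < z" then have "i < Suc z" by simp
    then show "\<exists>s. \<forall>s'\<ge>s. P s' i" by (rule Suc.prems[rule_format])
  qed
  obtain s1 where s1: "\<forall>s'\<ge>s1. \<forall>i<z. P s' i" using Suc.IH[OF pz] by (elim exE)
  have "\<exists>s. \<forall>s'\<ge>s. P s' z" by (rule Suc.prems[rule_format]) simp
  then obtain s2 where s2: "\<forall>s'\<ge>s2. P s' z" by (elim exE)
  have "\<forall>s'\<ge>max s1 s2. \<forall>i<Suc z. P s' i"
  proof (intro allI impI)
    fix s' i assume le: "max s1 s2 \<le> s'" and i: "i < Suc z"
    have le1: "s1 \<le> s'" using le by simp
    have le2: "s2 \<le> s'" using le by simp
    show "P s' i"
    proof (cases "i = z")
      case True then show ?thesis using s2 le2 by simp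
    next
      case False with i have "i < z" by simp
      then show ?thesis using s1 le1 by simp
    qed
  qed
  then show ?case by blast
qed

lemma bnd_complete: "eval r xs z \<Longrightarrow> \<exists>s. bnd r s xs = Suc z"
proof (induction rule: eval.induct)
  case (evZ xs) then show ?case by simp
next
  case (evS x xs) then show ?case by simp
next
  case (evProj i xs) then show ?case by simp
next
  case (evComp xs gs ys f z)
  have "list_all2 (\<lambda>g y. \<exists>s. bnd g s xs = Suc y) gs ys"
    using evComp.IH(1) by (rule list_all2_mono) simp
  from common_fuel_list[OF this] obtain s1 where s1: "\<forall>s'\<ge>s1. map (\<lambda>g. bnd g s' xs) gs = map Suc ys"
    by (elim exE)
  obtain s2 where s2: "bnd f s2 ys = Suc z" using evComp.IH(2) by blast
  let ?s = "max s1 s2"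
  have m: "map (\<lambda>g. bnd g ?s xs) gs = map Suc ys" using s1 by simp
  have ap: "allpos (map (\<lambda>g. bnd g ?s xs) gs)" unfolding m allpos_def by simp
  have "map (\<lambda>g. bnd g ?s xs - 1) gs = ys"
  proof -
    have "map (\<lambda>g. bnd g ?s xs - 1) gs = map (\<lambda>x. x - 1) (map (\<lambda>g. bnd g ?s xs) gs)" by simp
    also have "\<dots> = ys" unfolding m by (simp add: map_idI)
    finally show ?thesis .
  qed
  moreover have "bnd f ?s ys = Suc z" using bnd_mono[OF s2] by simp
  ultimately have "bnd (Comp f gs) ?s xs = Suc z" using ap by (simp only: bnd.simps(4) if_True)
  then show ?case by blast
next
  case (evPrim0 f xs z g)
  then obtain s where "bnd f s xs = Suc z" by blast
  then have "bnd (Prim f g) s (0 # xs) = Suc z" by simp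
  then show ?case by blast
next
  case (evPrimS f g n xs y z)
  obtain s1 where s1: "bnd (Prim f g) s1 (n # xs) = Suc y" using evPrimS.IH(1) by blast
  obtain s2 where s2: "bnd g s2 (y # n # xs) = Suc z" using evPrimS.IH(2) by blast
  let ?s = "max s1 s2"
  have a: "primb (bnd f ?s xs) (\<lambda>j y. bnd g ?s (y # j # xs)) n = Suc y"
    using bnd_mono[OF s1, of ?s] by simp
  have b: "bnd g ?s (y # n # xs) = Suc z" using bnd_mono[OF s2, of ?s] by simp
  have "bnd (Prim f g) ?s (Suc n # xs) = Suc z" using a b by simp
  then show ?case by blast
next
  case (evMn g z xs)
  obtain s0 where s0: "bnd g s0 (z # xs) = Suc 0" using evMn.IH(1) by blast
  have "\<forall>i<z. \<exists>s. \<forall>s'\<ge>s. \<exists>y>0. bnd g s' (i # xs) = Suc y"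
  proof (intro allI impI)
    fix i assume "i < z"
    then have "\<exists>y>0. eval g (i # xs) y \<and> (\<exists>s. bnd g s (i # xs) = Suc y)" using evMn.IH(2) by simp
    then obtain y s where y: "y > 0" and bs: "bnd g s (i # xs) = Suc y" by (elim exE conjE)
    have "\<forall>s'\<ge>s. \<exists>y>0. bnd g s' (i # xs) = Suc y"
    proof (intro allI impI)
      fix s' assume "s \<le> s'"
      then have "bnd g s' (i # xs) = Suc y" by (rule bnd_mono[OF bs])
      then show "\<exists>y>0. bnd g s' (i # xs) = Suc y" using y by (intro exI[of _ y]) simp
    qed
    then show "\<exists>s. \<forall>s'\<ge>s. \<exists>y>0. bnd g s' (i # xs) = Suc y" by (rule exI)
  qed
  then obtain s1 where s1: "\<forall>s'\<ge>s1. \<forall>i<z. \<exists>y>0. bnd g s' (i # xs) = Suc y"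
    by (rule common_fuel_nat[THEN exE])
  let ?s = "max (Suc z) (max s0 s1)"
  have "mnb (\<lambda>i. bnd g ?s (i # xs)) ?s = Suc z"
  proof (rule mnb_I)
    show "z < ?s" by simp
    show "bnd g ?s (z # xs) = 1" using bnd_mono[OF s0, of ?s] by simp
    show "\<forall>j<z. bnd g ?s (j # xs) > 1"
    proof (intro allI impI)
      fix j assume "j < z"
      have "\<forall>i<z. \<exists>y>0. bnd g ?s (i # xs) = Suc y" using s1 by simp
      then have "\<exists>y>0. bnd g ?s (j # xs) = Suc y" using \<open>j < z\<close> by simp
      then obtain y where "y > 0" "bnd g ?s (j # xs) = Suc y" by (elim exE conjE)
      then show "bnd g ?s (j # xs) > 1" by simp
    qed
  qed
  then have "bnd (Mn g) ?s xs = Suc z" by simp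
  then show ?case by blast
qed


lemma map_nth_take_drop: "k + m \<le> length l \<Longrightarrow> map (\<lambda>i. l ! (i + k)) [0..<m] = take m (drop k l)"
  by (rule nth_equalityI) (auto simp: add.commute)

lemma rc_comp_pre:
  assumes "rc (length Ps + m) F" "\<forall>P\<in>set Ps. rc n P" "k + m \<le> n"
  shows "rc n (\<lambda>l. F (map (\<lambda>P. P l) Ps @ take m (drop k l)))"
proof -
  let ?Gs = "Ps @ map (\<lambda>i l. l ! (i + k)) [0..<m]"
  have "rc n (\<lambda>l. F (map (\<lambda>G. G l) ?Gs))"
  proof (rule rc_comp)
    show "rc (length ?Gs) F" using assms(1) by simp
    show "\<forall>G\<in>set ?Gs. rc n G" using assms(2,3) by (auto intro!: rc_proj)
  qed
  then show ?thesis
  proof (rule rc_cong)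
    fix l :: "nat list" assume "length l = n"
    then have "map (\<lambda>i. l ! (i + k)) [0..<m] = take m (drop k l)" using assms(3)
      by (intro map_nth_take_drop) simp
    then show "F (map (\<lambda>G. G l) ?Gs) = F (map (\<lambda>P. P l) Ps @ take m (drop k l))"
      by (simp add: o_def)
  qed
qed

lemma rc_prodlist: "\<forall>g\<in>set gs. rc n (G g) \<Longrightarrow> rc n (\<lambda>l. prod_list (map (\<lambda>g. G g l) gs))"
proof (induction gs)
  case Nil then show ?case by (simp add: rc_const)
next
  case (Cons g gs)
  then have "rc n (\<lambda>l. G g l * prod_list (map (\<lambda>g. G g l) gs))" by (intro rc_mult) simp_all
  then show ?case by simp
qed

lemma allpos_prod: "allpos ys \<longleftrightarrow> prod_list ys \<noteq> (0::nat)"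
  by (induction ys) (simp_all add: allpos_def)

lemma rc_pred': "rc n F \<Longrightarrow> rc n (\<lambda>xs. F xs - Suc 0)"
  using rc_pred by simp

lemma rc_bnd: "rc (Suc n) (\<lambda>l. bnd r (hd l) (tl l))"
proof (induction r arbitrary: n)
  case Z show ?case by (rule rc_cong[OF rc_const[of "Suc n" 1]]) simp
next
  case S show ?case
  proof (cases n)
    case 0 show ?thesis
    proof (rule rc_cong[OF rc_const[of "Suc n" 0]])
      fix l :: "nat list" assume "length l = Suc n"
      then have "tl l = []" using 0 by (cases l) auto
      then show "0 = bnd S (hd l) (tl l)" by simp
    qed
  next
    case (Suc m)
    have "rc (Suc n) (\<lambda>l. Suc (Suc (l ! 1)))" using Suc by (intro rc_Suc rc_proj) simp
    then show ?thesis
    proof (rule rc_cong)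
      fix l :: "nat list" assume "length l = Suc n"
      then obtain a b l' where "l = a # b # l'" using Suc by (cases l; cases "tl l") auto
      then show "Suc (Suc (l ! 1)) = bnd S (hd l) (tl l)" by simp
    qed
  qed
next
  case (Proj i) show ?case
  proof (cases "i < n")
    case True
    have "rc (Suc n) (\<lambda>l. Suc (l ! Suc i))" using True by (intro rc_Suc rc_proj) simp
    then show ?thesis
    proof (rule rc_cong)
      fix l :: "nat list" assume "length l = Suc n"
      then obtain a l' where l: "l = a # l'" "length l' = n" by (cases l) auto
      then show "Suc (l ! Suc i) = bnd (Proj i) (hd l) (tl l)" using True by simp
    qed
  next
    case False
    show ?thesis
    proof (rule rc_cong[OF rc_const[of "Suc n" 0]])
      fix l :: "nat list" assume "length l = Suc n"
      then obtain a l' where l: "l = a # l'" "length l' = n" by (cases l) auto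
      then show "0 = bnd (Proj i) (hd l) (tl l)" using False by simp
    qed
  qed
next
  case (Comp f gs)
  let ?Ps = "(\<lambda>l. l ! 0) # map (\<lambda>g l. bnd g (hd l) (tl l) - 1) gs"
  have f: "rc (length ?Ps + 0) (\<lambda>l. bnd f (hd l) (tl l))" using Comp.IH(1) by simp
  have ps: "\<forall>P\<in>set ?Ps. rc (Suc n) P" using Comp.IH(2) by (auto intro!: rc_proj rc_pred rc_pred')
  have A: "rc (Suc n) (\<lambda>l. bnd f (hd (map (\<lambda>P. P l) ?Ps @ take 0 (drop 0 l))) (tl (map (\<lambda>P. P l) ?Ps @ take 0 (drop 0 l))))"
    by (rule rc_comp_pre[OF f ps]) simp
  have P: "rc (Suc n) (\<lambda>l. prod_list (map (\<lambda>g. bnd g (hd l) (tl l)) gs))"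
    using Comp.IH(2) by (intro rc_prodlist) simp
  have "rc (Suc n) (\<lambda>l. if prod_list (map (\<lambda>g. bnd g (hd l) (tl l)) gs) = 0 then 0 else
      bnd f (hd (map (\<lambda>P. P l) ?Ps @ take 0 (drop 0 l))) (tl (map (\<lambda>P. P l) ?Ps @ take 0 (drop 0 l))))"
    by (rule rc_ifz[OF P rc_const A])
  then show ?case
  proof (rule rc_cong)
    fix l :: "nat list" assume "length l = Suc n"
    then obtain a l' where l: "l = a # l'" by (cases l) auto
    have e: "(prod_list (map (\<lambda>g. bnd g (hd l) (tl l)) gs) = 0) = (\<not> allpos (map (\<lambda>g. bnd g (hd l) (tl l)) gs))"
      by (simp add: allpos_prod)
    show "(if prod_list (map (\<lambda>g. bnd g (hd l) (tl l)) gs) = 0 then 0 else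
      bnd f (hd (map (\<lambda>P. P l) ?Ps @ take 0 (drop 0 l))) (tl (map (\<lambda>P. P l) ?Ps @ take 0 (drop 0 l))))
      = bnd (Comp f gs) (hd l) (tl l)"
      unfolding e by (simp add: l o_def)
  qed
next
  case (Prim f g) show ?case
  proof (cases n)
    case 0 show ?thesis
    proof (rule rc_cong[OF rc_const[of "Suc n" 0]])
      fix l :: "nat list" assume "length l = Suc n"
      then have "tl l = []" using 0 by (cases l) auto
      then show "0 = bnd (Prim f g) (hd l) (tl l)" by simp
    qed
  next
    case (Suc m)
    let ?Ps = "[\<lambda>l::nat list. l ! 2, \<lambda>l. l ! 0 - 1, \<lambda>l. l ! 1]"
    have g: "rc (length ?Ps + m) (\<lambda>l. bnd g (hd l) (tl l))" using Prim.IH(2)[of "Suc (Suc m)"]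
      by (simp add: eval_nat_numeral)
    have ps: "\<forall>P\<in>set ?Ps. rc (Suc (Suc (Suc m))) P" by (auto intro!: rc_proj rc_pred rc_pred')
    have G0: "rc (Suc (Suc (Suc m))) (\<lambda>l. bnd g (hd (map (\<lambda>P. P l) ?Ps @ take m (drop 3 l))) (tl (map (\<lambda>P. P l) ?Ps @ take m (drop 3 l))))"
      by (rule rc_comp_pre[OF g ps]) simp
    have G: "rc (Suc (Suc (Suc m))) (\<lambda>l. if l ! 0 = 0 then 0 else bnd g (l ! 2) ((l ! 0 - 1) # l ! 1 # drop 3 l))"
    proof (rule rc_cong[OF rc_ifz[OF rc_proj rc_const G0]])
      show "0 < Suc (Suc (Suc m))" by simp
    next
      fix l :: "nat list" assume "length l = Suc (Suc (Suc m))"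
      then show "(if l ! 0 = 0 then 0 else bnd g (hd (map (\<lambda>P. P l) ?Ps @ take m (drop 3 l))) (tl (map (\<lambda>P. P l) ?Ps @ take m (drop 3 l))))
        = (if l ! 0 = 0 then 0 else bnd g (l ! 2) ((l ! 0 - 1) # l ! 1 # drop 3 l))" by simp
    qed
    have H: "rc (Suc (Suc m)) (\<lambda>xs. rec_nat (bnd f (hd (tl xs)) (tl (tl xs)))
        (\<lambda>k y. (\<lambda>l. if l ! 0 = 0 then 0 else bnd g (l ! 2) ((l ! 0 - 1) # l ! 1 # drop 3 l)) (y # k # tl xs)) (hd xs))"
      using rc_prim[OF Prim.IH(1)[of m] G] by simp
    let ?Qs = "[\<lambda>l::nat list. l ! 1, \<lambda>l. l ! 0]"
    have H': "rc (length ?Qs + m) (\<lambda>xs. rec_nat (bnd f (hd (tl xs)) (tl (tl xs)))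
        (\<lambda>k y. (\<lambda>l. if l ! 0 = 0 then 0 else bnd g (l ! 2) ((l ! 0 - 1) # l ! 1 # drop 3 l)) (y # k # tl xs)) (hd xs))"
      using H by simp
    have qs: "\<forall>P\<in>set ?Qs. rc (Suc n) P" using Suc by (auto intro!: rc_proj)
    from rc_comp_pre[OF H' qs, of 2]
    have "rc (Suc n) (\<lambda>l. rec_nat (bnd f (l ! 0) (take m (drop 2 l)))
        (\<lambda>k y. if y = 0 then 0 else bnd g (l ! 0) ((y - 1) # k # take m (drop 2 l))) (l ! 1))"
      using Suc by (simp cong: if_cong)
    then show ?thesis
    proof (rule rc_cong)
      fix l :: "nat list" assume "length l = Suc n"
      then obtain a b l' where l: "l = a # b # l'" "length l' = m" using Suc by (cases l; cases "tl l") auto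
      show "rec_nat (bnd f (l ! 0) (take m (drop 2 l)))
        (\<lambda>k y. if y = 0 then 0 else bnd g (l ! 0) ((y - 1) # k # take m (drop 2 l))) (l ! 1)
        = bnd (Prim f g) (hd l) (tl l)"
        using l by (simp add: primb_def cong: if_cong)
    qed
  qed
next
  case (Mn g)
  let ?Ps = "[\<lambda>l::nat list. l ! 1, \<lambda>l. l ! 0]"
  have g: "rc (length ?Ps + n) (\<lambda>l. bnd g (hd l) (tl l))" using Mn.IH[of "Suc n"] by simp
  have ps: "\<forall>P\<in>set ?Ps. rc (Suc (Suc n)) P" by (auto intro!: rc_proj)
  from rc_comp_pre[OF g ps, of 2]
  have G1: "rc (Suc (Suc n)) (\<lambda>l. bnd g (l ! 1) (l ! 0 # take n (drop 2 l)))" by simp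
  have F: "rc (Suc (Suc n)) (\<lambda>l. if bnd g (l ! 1) (l ! 0 # take n (drop 2 l)) \<le> 1 then 0 else 1)"
    by (intro rc_ifle G1 rc_const)
  define Ib where "Ib = (\<lambda>l. bmin (l ! 0) (\<lambda>i. bnd g (l ! 0) (i # take n (drop 1 l)) \<le> 1))"
  have I': "rc (Suc n) Ib"
  proof (rule rc_cong[OF rc_bmin[OF F rc_proj[of 0 "Suc n"]]])
    show "0 < Suc n" by simp
  next
    fix l :: "nat list"
    have "(\<lambda>i. (if bnd g ((i # l) ! 1) ((i # l) ! 0 # take n (drop 2 (i # l))) \<le> 1 then 0 else 1) = (0::nat))
      = (\<lambda>i. bnd g (l ! 0) (i # take n (drop 1 l)) \<le> 1)" by (rule ext) simp
    then show "bmin (l ! 0) (\<lambda>i. (if bnd g ((i # l) ! 1) ((i # l) ! 0 # take n (drop 2 (i # l))) \<le> 1 then 0 else 1) = (0::nat)) = Ib l"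
      unfolding Ib_def by simp
  qed
  let ?Qs = "[\<lambda>l::nat list. l ! 0, Ib]"
  have g2: "rc (length ?Qs + n) (\<lambda>l. bnd g (hd l) (tl l))" using Mn.IH[of "Suc n"] by simp
  have qs: "\<forall>P\<in>set ?Qs. rc (Suc n) P" using I' by (auto intro!: rc_proj)
  from rc_comp_pre[OF g2 qs, of 1]
  have G2: "rc (Suc n) (\<lambda>l. bnd g (l ! 0) (Ib l # take n (drop 1 l)))" by simp
  have "rc (Suc n) (\<lambda>l. if Suc (Ib l) \<le> l ! 0 then (if bnd g (l ! 0) (Ib l # take n (drop 1 l)) = 1 then Suc (Ib l) else 0) else 0)"
    by (intro rc_ifle rc_ifeq rc_Suc I' rc_proj G2 rc_const) simp
  then show ?case
  proof (rule rc_cong)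
    fix l :: "nat list" assume "length l = Suc n"
    then obtain a l' where l: "l = a # l'" "length l' = n" by (cases l) auto
    have ib: "Ib l = bmin a (\<lambda>i. bnd g a (i # l') \<le> 1)" unfolding Ib_def l using l by simp
    show "(if Suc (Ib l) \<le> l ! 0 then (if bnd g (l ! 0) (Ib l # take n (drop 1 l)) = 1 then Suc (Ib l) else 0) else 0)
      = bnd (Mn g) (hd l) (tl l)"
      unfolding ib using l by (simp add: mnb_def Suc_le_eq)
  qed
qed


lemma rc_bmin1: "rc 2 F \<Longrightarrow> rc 1 B \<Longrightarrow> rc 1 (\<lambda>xs. bmin (B xs) (\<lambda>i. F (i # xs) = 0))"
  using rc_bmin[of 1 F B] by (simp add: numeral_2_eq_2)
lemma rc_bmin2: "rc 3 F \<Longrightarrow> rc 2 B \<Longrightarrow> rc 2 (\<lambda>xs. bmin (B xs) (\<lambda>i. F (i # xs) = 0))"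
  using rc_bmin[of 2 F B] by (simp add: numeral_3_eq_3 numeral_2_eq_2)

lemma rc_tri0: "rc 1 (\<lambda>l. triangle (l ! 0))"
proof -
  have "rc 1 (\<lambda>l. rec_nat ((\<lambda>l. 0) []) (\<lambda>k y. (\<lambda>l. l ! 0 + Suc (l ! 1)) [y, k]) (l ! 0))"
    by (rule rc_prim1) (auto intro!: rc_const rc_add rc_Suc rc_proj)
  moreover have eq: "rec_nat 0 (\<lambda>k y. y + Suc k) a = triangle a" for a by (induction a) auto
  ultimately show ?thesis by (auto elim!: rc_cong)
qed

lemma rc_tri: assumes "rc n F" shows "rc n (\<lambda>xs. triangle (F xs))"
  using rc_comp1[OF rc_tri0 assms] by simp

lemma rc_penc: assumes "rc n F" "rc n G" shows "rc n (\<lambda>xs. prod_encode (F xs, G xs))"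
proof -
  have "rc n (\<lambda>xs. triangle (F xs + G xs) + F xs)" by (intro rc_add rc_tri assms)
  then show ?thesis by (rule rc_cong) (simp add: prod_encode_def)
qed

definition pfst :: "nat \<Rightarrow> nat" where "pfst w = fst (prod_decode w)"
definition psnd :: "nat \<Rightarrow> nat" where "psnd w = snd (prod_decode w)"

lemma pfst_bmin: "pfst w = bmin (Suc w) (\<lambda>a. bmin (Suc w) (\<lambda>b. prod_encode (a, b) = w) < Suc w)"
proof -
  obtain a b where ab: "prod_decode w = (a, b)" by (cases "prod_decode w")
  then have w: "w = prod_encode (a, b)" by (metis prod_decode_inverse)
  have a: "a \<le> w" "b \<le> w" unfolding w by (rule le_prod_encode_1, rule le_prod_encode_2)
  have inner: "bmin (Suc w) (\<lambda>b'. prod_encode (a', b') = w) < Suc w \<longleftrightarrow> a' = a" for a'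
  proof
    assume "bmin (Suc w) (\<lambda>b'. prod_encode (a', b') = w) < Suc w"
    then have "prod_encode (a', bmin (Suc w) (\<lambda>b'. prod_encode (a', b') = w)) = w" using bmin_lt by blast
    then show "a' = a" unfolding w by simp
  next
    assume "a' = a"
    then have "bmin (Suc w) (\<lambda>b'. prod_encode (a', b') = w) = b"
      using a unfolding w by (intro bmin_eqI) auto
    then show "bmin (Suc w) (\<lambda>b'. prod_encode (a', b') = w) < Suc w" using a by simp
  qed
  have "bmin (Suc w) (\<lambda>a'. bmin (Suc w) (\<lambda>b. prod_encode (a', b) = w) < Suc w) = a"
    using a by (intro bmin_eqI) (auto simp: inner)
  then show ?thesis unfolding pfst_def ab by simp
qed

lemma psnd_bmin: "psnd w = bmin (Suc w) (\<lambda>b. prod_encode (pfst w, b) = w)"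
proof -
  obtain a b where ab: "prod_decode w = (a, b)" by (cases "prod_decode w")
  then have w: "w = prod_encode (a, b)" by (metis prod_decode_inverse)
  have a: "a \<le> w" "b \<le> w" unfolding w by (rule le_prod_encode_1, rule le_prod_encode_2)
  have "bmin (Suc w) (\<lambda>b'. prod_encode (a, b') = w) = b"
    using a unfolding w by (intro bmin_eqI) auto
  then show ?thesis unfolding psnd_def pfst_def ab by simp
qed

lemma rc_pfst0: "rc 1 (\<lambda>l. pfst (l ! 0))"
proof -
  have i: "rc 3 (\<lambda>l. if prod_encode (l ! 1, l ! 0) = l ! 2 then 0 else 1)"
    by (intro rc_ifeq rc_penc rc_proj rc_const) simp_all
  have "rc 2 (\<lambda>xs. bmin (Suc (xs ! 1)) (\<lambda>i. (if prod_encode ((i # xs) ! 1, (i # xs) ! 0) = (i # xs) ! 2 then 0 else 1) = (0::nat)))"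
    by (rule rc_bmin2[OF i]) (intro rc_Suc rc_proj, simp)
  then have i2: "rc 2 (\<lambda>xs. bmin (Suc (xs ! 1)) (\<lambda>b. prod_encode (xs ! 0, b) = xs ! 1))"
    by (rule rc_cong) simp
  have o: "rc 2 (\<lambda>xs. if Suc (bmin (Suc (xs ! 1)) (\<lambda>b. prod_encode (xs ! 0, b) = xs ! 1)) \<le> Suc (xs ! 1) then 0 else 1)"
    by (intro rc_ifle rc_Suc i2 rc_proj rc_const) simp
  have "rc 1 (\<lambda>xs. bmin (Suc (xs ! 0)) (\<lambda>i. (if Suc (bmin (Suc ((i # xs) ! 1)) (\<lambda>b. prod_encode ((i # xs) ! 0, b) = (i # xs) ! 1)) \<le> Suc ((i # xs) ! 1) then 0 else 1) = (0::nat)))"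
    by (rule rc_bmin1[OF o]) (intro rc_Suc rc_proj, simp)
  then show ?thesis by (rule rc_cong) (simp add: pfst_bmin less_Suc_eq_le)
qed

lemma rc_pfst: assumes "rc n F" shows "rc n (\<lambda>xs. pfst (F xs))"
  using rc_comp1[OF rc_pfst0 assms] by simp

lemma rc_psnd0: "rc 1 (\<lambda>l. psnd (l ! 0))"
proof -
  have i: "rc 2 (\<lambda>l. if prod_encode (pfst (l ! 1), l ! 0) = l ! 1 then 0 else 1)"
    by (intro rc_ifeq rc_penc rc_pfst rc_proj rc_const) simp_all
  have "rc 1 (\<lambda>xs. bmin (Suc (xs ! 0)) (\<lambda>i. (if prod_encode (pfst ((i # xs) ! 1), (i # xs) ! 0) = (i # xs) ! 1 then 0 else 1) = (0::nat)))"
    by (rule rc_bmin1[OF i]) (intro rc_Suc rc_proj, simp)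
  then show ?thesis by (rule rc_cong) (simp add: psnd_bmin)
qed

lemma rc_psnd: assumes "rc n F" shows "rc n (\<lambda>xs. psnd (F xs))"
  using rc_comp1[OF rc_psnd0 assms] by simp

lemma pfst_enc[simp]: "pfst (prod_encode (a, b)) = a" by (simp add: pfst_def)
lemma psnd_enc[simp]: "psnd (prod_encode (a, b)) = b" by (simp add: psnd_def)
lemma pair_pfst_psnd: "prod_encode (pfst w, psnd w) = w" by (simp add: pfst_def psnd_def)


fun dec :: "nat \<Rightarrow> bool list" where
  "dec 0 = []"
| "dec (Suc n) = (if even n then False # dec (n div 2) else True # dec (n div 2))"

lemma enc_dec[simp]: "enc (dec n) = n"
proof (induction n rule: dec.induct)
  case 1 then show ?case by simp
next
  case (2 n) then show ?case by (cases "even n") (auto elim!: evenE oddE)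
qed

lemma dec_enc[simp]: "dec (enc xs) = xs"
proof (induction xs)
  case Nil then show ?case by simp
next
  case (Cons b bs)
  show ?case
  proof (cases b)
    case True
    then have "enc (b # bs) = Suc (2 * enc bs + 1)" by simp
    then show ?thesis using Cons True by simp
  next
    case False
    then have "enc (b # bs) = Suc (2 * enc bs)" by simp
    then show ?thesis using Cons False by simp
  qed
qed

lemma enc_inj: "enc p = enc q \<Longrightarrow> p = q"
  by (metis dec_enc)

lemma enc_append: "enc (xs @ ys) = enc xs + 2 ^ length xs * enc ys"
  by (induction xs) (auto simp: algebra_simps)

lemma enc_lower: "2 ^ length xs \<le> enc xs + 1"
  by (induction xs) auto

lemma enc_upper: "enc xs + 2 \<le> 2 ^ Suc (length xs)"
  by (induction xs) auto

lemma enc_replicate: "enc (replicate l True) + 2 = 2 ^ Suc l"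
  by (induction l) auto

definition len :: "nat \<Rightarrow> nat" where "len u = length (dec u)"

lemma len_bmin: "len u = bmin (Suc u) (\<lambda>n. u + 2 \<le> 2 ^ Suc n)"
proof -
  let ?L = "length (dec u)"
  have up: "u + 2 \<le> 2 ^ Suc ?L" using enc_upper[of "dec u"] by simp
  have lo: "2 ^ ?L \<le> u + 1" using enc_lower[of "dec u"] by simp
  have "?L < 2 ^ ?L" by (rule less_exp)
  then have lt: "?L < Suc u" using lo by linarith
  have "\<forall>j<?L. \<not> u + 2 \<le> 2 ^ Suc j"
  proof (intro allI impI)
    fix j assume "j < ?L"
    then have "2 ^ Suc j \<le> (2::nat) ^ ?L" by (intro power_increasing) simp_all
    then show "\<not> u + 2 \<le> 2 ^ Suc j" using lo by simp
  qed
  then have "bmin (Suc u) (\<lambda>n. u + 2 \<le> 2 ^ Suc n) = ?L" using lt up by (intro bmin_eqI) simp_all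
  then show ?thesis unfolding len_def by simp
qed

lemma rc_len0: "rc 1 (\<lambda>l. len (l ! 0))"
proof -
  have i: "rc 2 (\<lambda>l. if l ! 1 + 2 \<le> 2 ^ Suc (l ! 0) then 0 else 1)"
    by (intro rc_ifle rc_add rc_pow rc_Suc rc_proj rc_const) simp_all
  have "rc 1 (\<lambda>xs. bmin (Suc (xs ! 0)) (\<lambda>i. (if (i # xs) ! 1 + 2 \<le> 2 ^ Suc ((i # xs) ! 0) then 0 else 1) = (0::nat)))"
    by (rule rc_bmin1[OF i]) (intro rc_Suc rc_proj, simp)
  then show ?thesis by (rule rc_cong) (simp add: len_bmin)
qed

lemma rc_len: assumes "rc n F" shows "rc n (\<lambda>xs. len (F xs))"
  using rc_comp1[OF rc_len0 assms] by simp

definition c0 :: "bool list \<Rightarrow> bool list \<Rightarrow> bool list" where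
  "c0 p q = (if length p \<le> length q
     then True # replicate (length (dec (min (length p) (length q)))) True @ False # dec (min (length p) (length q)) @ p @ q
     else False # replicate (length (dec (min (length p) (length q)))) True @ False # dec (min (length p) (length q)) @ q @ p)"

definition Ecode :: "nat \<Rightarrow> nat \<Rightarrow> nat \<Rightarrow> nat" where
  "Ecode l m X = (2 ^ Suc l - 2) + 2 ^ l * (2 * (m + 2 ^ l * X) + 1)"

lemma enc_pre: "enc (replicate (length (dec m)) True @ False # dec m @ X) = Ecode (length (dec m)) m (enc X)"
proof -
  let ?l = "length (dec m)"
  have r: "enc (replicate ?l True) = 2 ^ Suc ?l - 2" using enc_replicate[of ?l] by simp
  show ?thesis unfolding Ecode_def by (simp add: enc_append r)
qed

definition C0code :: "nat \<Rightarrow> nat \<Rightarrow> nat" where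
  "C0code u v = (if len u \<le> len v
     then 2 * Ecode (len (min (len u) (len v))) (min (len u) (len v)) (u + 2 ^ len u * v) + 2
     else 2 * Ecode (len (min (len u) (len v))) (min (len u) (len v)) (v + 2 ^ len v * u) + 1)"

lemma enc_c0: "enc (c0 p q) = C0code (enc p) (enc q)"
proof -
  let ?m = "min (length p) (length q)"
  have "enc (c0 p q) = (if length p \<le> length q
     then 2 * enc (replicate (length (dec ?m)) True @ False # dec ?m @ p @ q) + 2
     else 2 * enc (replicate (length (dec ?m)) True @ False # dec ?m @ q @ p) + 1)"
    unfolding c0_def by simp
  also have "\<dots> = (if length p \<le> length q
     then 2 * Ecode (length (dec ?m)) ?m (enc (p @ q)) + 2
     else 2 * Ecode (length (dec ?m)) ?m (enc (q @ p)) + 1)"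
    by (simp only: enc_pre)
  also have "\<dots> = C0code (enc p) (enc q)"
    unfolding C0code_def len_def by (simp add: enc_append)
  finally show ?thesis .
qed

lemma rc_Ecode: assumes "rc n L" "rc n M" "rc n X" shows "rc n (\<lambda>xs. Ecode (L xs) (M xs) (X xs))"
  unfolding Ecode_def by (intro rc_add rc_mult rc_sub rc_pow rc_Suc rc_const assms)

lemma rc_C0code: "rc 2 (\<lambda>l. C0code (l ! 0) (l ! 1))"
  unfolding C0code_def
  by (intro rc_ifle rc_len rc_add rc_mult rc_pow rc_Ecode rc_min rc_proj rc_const) simp_all

lemma tc_c0: "total_computable2 c0"
proof -
  obtain r where r: "\<forall>xs. length xs = 2 \<longrightarrow> eval r xs (C0code (xs ! 0) (xs ! 1))"
    using rc_C0code unfolding rc_def by blast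
  have "eval r [enc p, enc q] z \<longleftrightarrow> z = enc (c0 p q)" for p q z
  proof
    have e: "eval r [enc p, enc q] (enc (c0 p q))" using r[rule_format, of "[enc p, enc q]"] by (simp add: enc_c0)
    show "eval r [enc p, enc q] z \<Longrightarrow> z = enc (c0 p q)" using eval_fun[OF _ e] by blast
    show "z = enc (c0 p q) \<Longrightarrow> eval r [enc p, enc q] z" using e by simp
  qed
  then show ?thesis unfolding total_computable2_def by blast
qed

lemma rep_split: "replicate l True @ False # X = replicate l' True @ False # Y \<Longrightarrow> l = l' \<and> X = Y"
proof (induction l arbitrary: l')
  case 0 then show ?case by (cases l') auto
next
  case (Suc l) then show ?case by (cases l') auto
qed

lemma c0_inj: assumes "c0 p q = c0 p' q'" shows "p = p' \<and> q = q'"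
proof (cases "length p \<le> length q")
  case True
  have T': "length p' \<le> length q'"
  proof (rule ccontr)
    assume "\<not> length p' \<le> length q'"
    then show False using assms True unfolding c0_def by simp
  qed
  let ?m = "min (length p) (length q)" and ?m' = "min (length p') (length q')"
  have "replicate (length (dec ?m)) True @ False # dec ?m @ p @ q = replicate (length (dec ?m')) True @ False # dec ?m' @ p' @ q'"
    using assms True T' unfolding c0_def by simp
  from rep_split[OF this] have l: "length (dec ?m) = length (dec ?m')" and e: "dec ?m @ p @ q = dec ?m' @ p' @ q'" by auto
  from e l have "dec ?m = dec ?m'" and e2: "p @ q = p' @ q'" by (auto simp: append_eq_append_conv)
  then have "?m = ?m'" by (metis enc_dec)
  then have "length p = length p'" using True T' by simp
  then show ?thesis using e2 by (auto simp: append_eq_append_conv)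
next
  case False
  have T': "\<not> length p' \<le> length q'"
  proof
    assume "length p' \<le> length q'"
    then show False using assms False unfolding c0_def by simp
  qed
  let ?m = "min (length p) (length q)" and ?m' = "min (length p') (length q')"
  have "replicate (length (dec ?m)) True @ False # dec ?m @ q @ p = replicate (length (dec ?m')) True @ False # dec ?m' @ q' @ p'"
    using assms False T' unfolding c0_def by simp
  from rep_split[OF this] have l: "length (dec ?m) = length (dec ?m')" and e: "dec ?m @ q @ p = dec ?m' @ q' @ p'" by auto
  from e l have "dec ?m = dec ?m'" and e2: "q @ p = q' @ p'" by (auto simp: append_eq_append_conv)
  then have "?m = ?m'" by (metis enc_dec)
  then have "length q = length q'" using False T' by simp
  then show ?thesis using e2 by (auto simp: append_eq_append_conv)
qed

lemma c0_length: "length (c0 p q) = 2 + 2 * length (dec (min (length p) (length q))) + length p + length q"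
  unfolding c0_def by simp


lemma chain_max:
  assumes tr: "\<forall>x y z. lt x y \<longrightarrow> lt y z \<longrightarrow> lt x z"
  shows "finite V \<Longrightarrow> V \<noteq> {} \<Longrightarrow> \<forall>x\<in>V. \<forall>y\<in>V. x = y \<or> lt x y \<or> lt y x \<Longrightarrow> \<exists>d\<in>V. \<forall>e\<in>V. e = d \<or> lt e d"
proof (induction V rule: finite_ne_induct)
  case (singleton x) then show ?case by simp
next
  case (insert x F)
  then obtain d where d: "d \<in> F" "\<forall>e\<in>F. e = d \<or> lt e d" by auto
  have "x = d \<or> lt x d \<or> lt d x" using insert.prems d(1) by auto
  then show ?case
  proof (elim disjE)
    assume "x = d" then show ?thesis using d by auto
  next
    assume "lt x d" then show ?thesis using d by auto
  next
    assume xd: "lt d x"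
    have "\<forall>e\<in>insert x F. e = x \<or> lt e x"
    proof
      fix e assume "e \<in> insert x F"
      then have "e = x \<or> e = d \<or> lt e d" using d by auto
      then show "e = x \<or> lt e x" using xd tr by blast
    qed
    then show ?thesis by auto
  qed
qed

lemma maxD_prop:
  assumes irr: "\<forall>x. \<not> lt x x" and tr: "\<forall>x y z. lt x y \<longrightarrow> lt y z \<longrightarrow> lt x z"
    and mono: "mono_incr lt f" and m: "maxD lt f p = Some d"
  shows "(\<exists>t. f p t = Some d) \<and> (\<forall>t e. f p t = Some e \<longrightarrow> e = d \<or> lt e d)"
proof -
  define V where "V = {d. \<exists>t. f p t = Some d}"
  have fin: "finite V \<and> V \<noteq> {}"
  proof (rule ccontr)
    assume "\<not> (finite V \<and> V \<noteq> {})"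
    then have "maxD lt f p = None" unfolding maxD_def V_def[symmetric] Let_def by (rule if_not_P)
    with m show False by simp
  qed
  have "maxD lt f p = Some (THE d. d \<in> V \<and> (\<forall>e\<in>V. e = d \<or> lt e d))"
    unfolding maxD_def V_def[symmetric] Let_def using fin by (rule if_P)
  then have dd: "d = (THE d. d \<in> V \<and> (\<forall>e\<in>V. e = d \<or> lt e d))" using m by simp
  have ch: "\<forall>x\<in>V. \<forall>y\<in>V. x = y \<or> lt x y \<or> lt y x"
  proof (intro ballI)
    fix x y assume "x \<in> V" "y \<in> V"
    then obtain t t' where fx: "f p t = Some x" and fy: "f p t' = Some y" unfolding V_def by auto
    have mi: "\<And>t t' a b. t \<le> t' \<Longrightarrow> f p t = Some a \<Longrightarrow> f p t' = Some b \<Longrightarrow> a = b \<or> lt a b"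
      using mono unfolding mono_incr_def by blast
    show "x = y \<or> lt x y \<or> lt y x"
    proof (cases "t \<le> t'")
      case True then show ?thesis using mi[OF True fx fy] by blast
    next
      case False then have "t' \<le> t" by simp
      then show ?thesis using mi[OF _ fy fx] by blast
    qed
  qed
  have "\<exists>d\<in>V. \<forall>e\<in>V. e = d \<or> lt e d"
    using fin ch by (intro chain_max[OF tr]) simp_all
  then obtain d0 where d0: "d0 \<in> V" "\<forall>e\<in>V. e = d0 \<or> lt e d0" by (elim bexE)
  have "d0 \<in> V \<and> (\<forall>e\<in>V. e = d0 \<or> lt e d0)" using d0 by blast
  moreover have "d' = d0" if "d' \<in> V \<and> (\<forall>e\<in>V. e = d' \<or> lt e d')" for d'
  proof (rule ccontr)
    assume ne: "d' \<noteq> d0"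
    have "d' = d0 \<or> lt d' d0" using d0(2) that by blast
    with ne have a: "lt d' d0" by simp
    have "d0 = d' \<or> lt d0 d'" using that d0(1) by blast
    with ne have b: "lt d0 d'" by auto
    have "lt d' d'" using tr a b by blast
    with irr show False by blast
  qed
  ultimately have "d = d0" unfolding dd by (rule the_equality)
  then show ?thesis using d0 unfolding V_def by blast
qed


lemma rc_of_tc: assumes "total_computable2 c" shows "rc 2 (\<lambda>l. enc (c (dec (l ! 0)) (dec (l ! 1))))"
proof -
  obtain r where r: "\<forall>p q z. eval r [enc p, enc q] z \<longleftrightarrow> z = enc (c p q)"
    using assms unfolding total_computable2_def by blast
  have "eval r l (enc (c (dec (l ! 0)) (dec (l ! 1))))" if "length l = 2" for l
  proof -
    have l: "l = [l ! 0, l ! 1]" using that by (rule len2)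
    have "eval r [enc (dec (l ! 0)), enc (dec (l ! 1))] (enc (c (dec (l ! 0)) (dec (l ! 1))))" using r by blast
    then show ?thesis using l by simp
  qed
  then show ?thesis unfolding rc_def by blast
qed

lemma rc_bnd3: "rc 3 (\<lambda>l. bnd r (hd l) (tl l))"
  using rc_bnd[of 2 r] by (simp add: numeral_3_eq_3 numeral_2_eq_2)

definition Tfun :: "(nat list \<Rightarrow> nat) \<Rightarrow> (nat list \<Rightarrow> nat) \<Rightarrow> (nat list \<Rightarrow> nat) \<Rightarrow> nat list \<Rightarrow> nat" where
  "Tfun Cc Bg Bf l = (if Cc [pfst (l ! 0), pfst (psnd (l ! 0))] = l ! 1
     then (if Bg [psnd (psnd (psnd (psnd (l ! 0)))), pfst (l ! 0), pfst (psnd (psnd (l ! 0)))] = 0 then 1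
       else (if Bg [psnd (psnd (psnd (psnd (l ! 0)))), pfst (l ! 0), pfst (psnd (psnd (l ! 0)))]
              = Bf [psnd (psnd (psnd (psnd (l ! 0)))), pfst (psnd (l ! 0)), pfst (psnd (psnd (psnd (l ! 0))))] then 0 else 1))
     else 1)"

definition Ofun :: "(nat list \<Rightarrow> nat) \<Rightarrow> nat list \<Rightarrow> nat" where
  "Ofun Bg l = Bg [psnd (psnd (psnd (psnd (l ! 0)))), pfst (l ! 0), pfst (psnd (psnd (l ! 0)))] - 1"

lemma rc_Tfun: assumes "rc 2 Cc" "rc 3 Bg" "rc 3 Bf" shows "rc 2 (Tfun Cc Bg Bf)"
  unfolding Tfun_def
  by (intro rc_ifeq rc_ifz rc_comp2[OF assms(1)] rc_comp3[OF assms(2)] rc_comp3[OF assms(3)]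
      rc_pfst rc_psnd rc_proj rc_const) simp_all

lemma rc_Ofun: assumes "rc 3 Bg" shows "rc 2 (Ofun Bg)"
  unfolding Ofun_def by (intro rc_pred rc_comp3[OF assms] rc_pfst rc_psnd rc_proj) simp_all

lemma machine:
  assumes "rc 2 T" "rc 2 Ou"
  shows "\<exists>R. (\<forall>x z. eval R [x] z \<longrightarrow> (\<exists>w. T [w, x] = 0 \<and> z = Ou [w, x]))
           \<and> (\<forall>x w. T [w, x] = 0 \<longrightarrow> (\<exists>z. eval R [x] z))"
proof -
  obtain rM where rM: "\<forall>xs z. length xs = 1 \<longrightarrow> (eval rM xs z \<longleftrightarrow> T (z # xs) = 0 \<and> (\<forall>i<z. T (i # xs) \<noteq> 0))"
    using rc_mn[of 1 T] assms(1) by (auto simp: numeral_2_eq_2)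
  obtain rO where rO: "\<forall>xs. length xs = 2 \<longrightarrow> eval rO xs (Ou xs)" using assms(2) unfolding rc_def by blast
  let ?R = "Comp rO [rM, Proj 0]"
  have s: "\<exists>w. T [w, x] = 0 \<and> z = Ou [w, x]" if e: "eval ?R [x] z" for x z
  proof -
    from e obtain ys where a: "list_all2 (\<lambda>g y. eval g [x] y) [rM, Proj 0] ys" and b: "eval rO ys z"
      by (rule evCompE) simp
    from a obtain w x' where ys: "ys = [w, x']" and w: "eval rM [x] w" and x': "eval (Proj 0) [x] x'"
      by (auto simp: list_all2_Cons1)
    have "x' = x" using x' by (rule evProjE) simp
    have "T [w, x] = 0" using w rM by simp
    moreover have "eval rO [w, x] (Ou [w, x])" using rO by simp
    then have "z = Ou [w, x]" using b ys \<open>x' = x\<close> eval_fun by blast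
    ultimately show ?thesis by blast
  qed
  have c: "\<exists>z. eval ?R [x] z" if t: "T [w, x] = 0" for x w
  proof -
    define w0 where "w0 = (LEAST w. T [w, x] = 0)"
    have "T [w0, x] = 0" unfolding w0_def using t by (rule LeastI)
    moreover have "\<forall>i<w0. T [i, x] \<noteq> 0" unfolding w0_def using not_less_Least by blast
    ultimately have em: "eval rM [x] w0" using rM by simp
    have ep: "eval (Proj 0) [x] x" using evProj[of 0 "[x]"] by simp
    have "list_all2 (\<lambda>g y. eval g [x] y) [rM, Proj 0] [w0, x]" using em ep by simp
    moreover have "eval rO [w0, x] (Ou [w0, x])" using rO by simp
    ultimately have "eval ?R [x] (Ou [w0, x])" by (rule evComp)
    then show ?thesis by blast
  qed
  show ?thesis using s c by blast
qed


lemma core: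
  fixes lt :: "'d \<Rightarrow> 'd \<Rightarrow> bool" and rho :: "nat \<Rightarrow> 'd"
  assumes cp: "computable_poset lt rho" and tc: "total_computable2 c"
    and ci: "\<forall>p q p' q'. c p q = c p' q' \<longrightarrow> p = p' \<and> q = q'"
    and g: "pc_str_nat rho g" "mono_incr (\<lambda>x y. lt y x) g"
    and f: "pc_str_nat rho f" "mono_incr lt f"
  shows "\<exists>\<psi>. pc_str rho \<psi> \<and> (\<forall>p q d. maxD (\<lambda>x y. lt y x) g p = Some d \<longrightarrow> maxD lt f q = Some d \<longrightarrow> \<psi> (c p q) = Some d)"
proof -
  have bij: "bij rho" and irr: "\<forall>x. \<not> lt x x" and tr: "\<forall>x y z. lt x y \<longrightarrow> lt y z \<longrightarrow> lt x z"
    using cp unfolding computable_poset_def by auto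
  have irr': "\<forall>x. \<not> (\<lambda>x y. lt y x) x x" using irr by simp
  have tr': "\<forall>x y z. (\<lambda>x y. lt y x) x y \<longrightarrow> (\<lambda>x y. lt y x) y z \<longrightarrow> (\<lambda>x y. lt y x) x z" using tr by blast
  have inj: "inj rho" using bij by (rule bij_is_inj)
  have surj: "surj rho" using bij by (rule bij_is_surj)
  obtain rg where rg: "\<forall>p t z. eval rg [enc p, t] z \<longleftrightarrow> g p t = Some (rho z)"
    using g(1) unfolding pc_str_nat_def by blast
  obtain rf where rf: "\<forall>p t z. eval rf [enc p, t] z \<longleftrightarrow> f p t = Some (rho z)"
    using f(1) unfolding pc_str_nat_def by blast
  define Cc where "Cc = (\<lambda>l. enc (c (dec (l ! 0)) (dec (l ! 1))))"
  define Bg where "Bg = (\<lambda>l. bnd rg (hd l) (tl l))"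
  define Bf where "Bf = (\<lambda>l. bnd rf (hd l) (tl l))"
  have rcC: "rc 2 Cc" unfolding Cc_def by (rule rc_of_tc[OF tc])
  have rcG: "rc 3 Bg" unfolding Bg_def by (rule rc_bnd3)
  have rcF: "rc 3 Bf" unfolding Bf_def by (rule rc_bnd3)
  obtain R where Rs: "\<forall>x z. eval R [x] z \<longrightarrow> (\<exists>w. Tfun Cc Bg Bf [w, x] = 0 \<and> z = Ofun Bg [w, x])"
    and Rc: "\<forall>x w. Tfun Cc Bg Bf [w, x] = 0 \<longrightarrow> (\<exists>z. eval R [x] z)"
    using machine[OF rc_Tfun[OF rcC rcG rcF] rc_Ofun[OF rcG]] by blast
  define \<psi> where "\<psi> = (\<lambda>p. if \<exists>z. eval R [enc p] z then Some (rho (THE z. eval R [enc p] z)) else None)"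
  have the: "(THE z. eval R [enc p] z) = z" if "eval R [enc p] z" for p z
    using that eval_fun by blast
  have pc: "pc_str rho \<psi>"
    unfolding pc_str_def
  proof (intro exI[of _ R] allI)
    fix p z
    show "eval R [enc p] z \<longleftrightarrow> \<psi> p = Some (rho z)"
    proof
      assume "eval R [enc p] z"
      then show "\<psi> p = Some (rho z)" unfolding \<psi>_def using the by auto
    next
      assume a: "\<psi> p = Some (rho z)"
      then have ex: "\<exists>z. eval R [enc p] z" unfolding \<psi>_def by (cases "\<exists>z. eval R [enc p] z") auto
      then obtain z' where z': "eval R [enc p] z'" by blast
      then have "\<psi> p = Some (rho z')" unfolding \<psi>_def using the by auto
      with a have "rho z' = rho z" by simp
      then have "z' = z" using inj by (simp add: inj_eq)
      then show "eval R [enc p] z" using z' by simp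
    qed
  qed
  have corr: "\<psi> (c p q) = Some d" if mg: "maxD (\<lambda>x y. lt y x) g p = Some d" and mf: "maxD lt f q = Some d" for p q d
  proof -
    note Pg = maxD_prop[OF irr' tr' g(2) mg]
    note Pf = maxD_prop[OF irr tr f(2) mf]
    obtain t1 where t1: "g p t1 = Some d" using Pg by blast
    obtain t2 where t2: "f q t2 = Some d" using Pf by blast
    have d: "rho (inv rho d) = d" using surj by (rule surj_f_inv_f)
    have "eval rg [enc p, t1] (inv rho d)" using rg t1 d by simp
    then obtain s1 where s1: "bnd rg s1 [enc p, t1] = Suc (inv rho d)" using bnd_complete by blast
    have "eval rf [enc q, t2] (inv rho d)" using rf t2 d by simp
    then obtain s2 where s2: "bnd rf s2 [enc q, t2] = Suc (inv rho d)" using bnd_complete by blast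
    define s where "s = max s1 s2"
    have b1: "bnd rg s [enc p, t1] = Suc (inv rho d)" using bnd_mono[OF s1] unfolding s_def by simp
    have b2: "bnd rf s [enc q, t2] = Suc (inv rho d)" using bnd_mono[OF s2] unfolding s_def by simp
    define x where "x = enc (c p q)"
    define w0 where "w0 = prod_encode (enc p, prod_encode (enc q, prod_encode (t1, prod_encode (t2, s))))"
    have "Tfun Cc Bg Bf [w0, x] = 0"
      unfolding Tfun_def w0_def x_def Cc_def Bg_def Bf_def using b1 b2 by simp
    then obtain z where ez: "eval R [x] z" using Rc by blast
    from Rs ez obtain w where tw: "Tfun Cc Bg Bf [w, x] = 0" and zw: "z = Ofun Bg [w, x]" by blast
    define u where "u = pfst w"
    define v where "v = pfst (psnd w)"
    define ta where "ta = pfst (psnd (psnd w))"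
    define tb where "tb = pfst (psnd (psnd (psnd w)))"
    define sw where "sw = psnd (psnd (psnd (psnd w)))"
    have cc: "enc (c (dec u) (dec v)) = x" and bg0: "bnd rg sw [u, ta] \<noteq> 0"
      and bgf: "bnd rg sw [u, ta] = bnd rf sw [v, tb]"
      using tw unfolding Tfun_def Cc_def Bg_def Bf_def u_def v_def ta_def tb_def sw_def
      by (auto split: if_splits)
    have "c (dec u) (dec v) = c p q" using cc unfolding x_def by (rule enc_inj)
    then have up: "dec u = p" and vq: "dec v = q" using ci by blast+
    have zz: "z = bnd rg sw [u, ta] - 1" using zw unfolding Ofun_def Bg_def u_def ta_def sw_def by simp
    have bz: "bnd rg sw [u, ta] = Suc z" using bg0 zz by simp
    have "eval rg [u, ta] z" using bz by (rule bnd_sound)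
    then have "eval rg [enc p, ta] z" using up by (metis enc_dec)
    then have gz: "g p ta = Some (rho z)" using rg by blast
    have "bnd rf sw [v, tb] = Suc z" using bz bgf by simp
    then have "eval rf [v, tb] z" by (rule bnd_sound)
    then have "eval rf [enc q, tb] z" using vq by (metis enc_dec)
    then have fz: "f q tb = Some (rho z)" using rf by blast
    have o1: "rho z = d \<or> lt d (rho z)" using Pg gz by blast
    have o2: "rho z = d \<or> lt (rho z) d" using Pf fz by blast
    have rz: "rho z = d"
    proof (rule ccontr)
      assume "rho z \<noteq> d"
      then have "lt d (rho z)" "lt (rho z) d" using o1 o2 by auto
      then have "lt d d" using tr by blast
      then show False using irr by blast
    qed
    have "eval R [enc (c p q)] z" using ez unfolding x_def .
    then have "\<psi> (c p q) = Some (rho z)" unfolding \<psi>_def using the by auto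
    then show ?thesis using rz by simp
  qed
  show ?thesis using pc corr by blast
qed


lemma logz_nonneg: "logz n \<ge> 0"
  unfolding logz_def by simp

lemma log_bound:
  fixes a b :: nat
  shows "real (2 + 2 * length (dec (min a b)) + a + b) \<le> (real b + logz b) + (real a + logz a) + 4"
proof -
  define m where "m = min a b"
  define l where "l = length (dec m)"
  have pl: "2 ^ l \<le> m + 1" unfolding l_def using enc_lower[of "dec m"] by simp
  show ?thesis
  proof (cases "m = 0")
    case True
    then have "l = 0" unfolding l_def by simp
    then show ?thesis using logz_nonneg[of a] logz_nonneg[of b] unfolding m_def[symmetric] l_def[symmetric] by simp
  next
    case False
    then have m1: "m \<ge> 1" by simp
    have a1: "a \<ge> m" "b \<ge> m" unfolding m_def by simp_all
    have "(2::nat) ^ l \<le> 2 * m" using pl m1 by simp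
    then have "(2::real) ^ l \<le> 2 * real m" by (metis of_nat_le_iff of_nat_mult of_nat_numeral of_nat_power)
    then have "2 powr real l \<le> 2 * real m" by (simp add: powr_realpow)
    then have "log 2 (2 powr real l) \<le> log 2 (2 * real m)" using m1 by (subst log_le_cancel_iff) auto
    then have ll: "real l \<le> 1 + log 2 (real m)" using m1 by (simp add: log_mult)
    have la: "log 2 (real m) \<le> log 2 (real a)" using a1 m1 by (subst log_le_cancel_iff) auto
    have lb: "log 2 (real m) \<le> log 2 (real b)" using a1 m1 by (subst log_le_cancel_iff) auto
    have "logz a = log 2 (real a)" "logz b = log 2 (real b)" using a1 m1 unfolding logz_def by auto
    then show ?thesis using ll la lb unfolding m_def[symmetric] l_def[symmetric] by simp
  qed
qed


lemma Kc_le: "\<phi> p = Some d \<Longrightarrow> \<exists>k. Kc \<phi> d = Some k \<and> k \<le> length p"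
proof -
  assume a: "\<phi> p = Some d"
  then have "Kc \<phi> d = Some (LEAST n. \<exists>p. \<phi> p = Some d \<and> length p = n)" unfolding Kc_def by auto
  moreover have "(LEAST n. \<exists>p. \<phi> p = Some d \<and> length p = n) \<le> length p" using a by (intro Least_le) blast
  ultimately show ?thesis by blast
qed

lemma Kc_wit: "Kc \<phi> d = Some k \<Longrightarrow> \<exists>p. \<phi> p = Some d \<and> length p = k"
proof -
  assume a: "Kc \<phi> d = Some k"
  then have ex: "\<exists>p. \<phi> p = Some d" unfolding Kc_def by (cases "\<exists>p. \<phi> p = Some d") auto
  then have k: "k = (LEAST n. \<exists>p. \<phi> p = Some d \<and> length p = n)" using a unfolding Kc_def by simp
  from ex have "\<exists>n p. \<phi> p = Some d \<and> length p = n" by blast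
  then have "\<exists>p. \<phi> p = Some d \<and> length p = (LEAST n. \<exists>p. \<phi> p = Some d \<and> length p = n)" by (rule LeastI_ex)
  then show ?thesis using k by simp
qed

lemma const_MaxPR:
  assumes "bij rho"
  shows "maxD lt (\<lambda>p t. Some d) \<in> MaxPR lt rho \<and> maxD lt (\<lambda>p t. Some d) [] = Some d"
proof -
  obtain r where r: "\<forall>xs. length xs = 2 \<longrightarrow> eval r xs (inv rho d)" using rc_const[of 2 "inv rho d"] unfolding rc_def by blast
  have rd: "rho (inv rho d) = d" using bij_is_surj[OF assms] by (rule surj_f_inv_f)
  have inj: "inj rho" using assms by (rule bij_is_inj)
  have "eval r [enc p, t] z \<longleftrightarrow> Some d = Some (rho z)" for p t z
  proof
    assume "eval r [enc p, t] z"
    then have "z = inv rho d" using eval_fun r by fastforce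
    then show "Some d = Some (rho z)" using rd by simp
  next
    assume "Some d = Some (rho z)"
    then have "rho z = rho (inv rho d)" using rd by simp
    then have "z = inv rho d" using inj by (simp add: inj_eq)
    then show "eval r [enc p, t] z" using r by simp
  qed
  then have pc: "pc_str_nat rho (\<lambda>p t. Some d)" unfolding pc_str_nat_def by blast
  have mi: "mono_incr lt (\<lambda>p t. Some d)" unfolding mono_incr_def by simp
  have "maxD lt (\<lambda>p t. Some d) [] = Some d"
  proof -
    have V: "{d'. \<exists>t::nat. Some d = Some d'} = {d}" by auto
    have "(THE d'. d' \<in> {d} \<and> (\<forall>e\<in>{d}. e = d' \<or> lt e d')) = d" by (rule the_equality) auto
    then show ?thesis unfolding maxD_def Let_def V by simp
  qed
  then show ?thesis using pc mi unfolding MaxPR_def by blast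
qed

lemma Kc_opt_defined:
  assumes "bij rho" "optimal_in (MaxPR lt rho) U"
  shows "\<exists>a. Kc U d = Some a"
proof -
  note cm = const_MaxPR[OF assms(1), of lt d]
  from assms(2) cm obtain c where c: "\<forall>d' k. Kc (maxD lt (\<lambda>p t. Some d)) d' = Some k \<longrightarrow> (\<exists>k'. Kc U d' = Some k' \<and> k' \<le> k + c)"
    unfolding optimal_in_def by blast
  obtain k where "Kc (maxD lt (\<lambda>p t. Some d)) d = Some k" using Kc_le[of "maxD lt (\<lambda>p t. Some d)" "[]" d] cm by blast
  then show ?thesis using c by blast
qed


lemma key_bound:
  fixes lt :: "'d \<Rightarrow> 'd \<Rightarrow> bool" and rho :: "nat \<Rightarrow> 'd"
  assumes cp: "computable_poset lt rho" and tc: "total_computable2 c"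
    and ci: "\<forall>p q p' q'. c p q = c p' q' \<longrightarrow> p = p' \<and> q = q'"
    and o1: "optimal_in (PC rho) \<phi>"
    and o2: "optimal_in (MaxPR lt rho) Umax"
    and o3: "optimal_in (MaxPR (\<lambda>x y. lt y x) rho) Umin"
  shows "\<exists>C. \<forall>d. \<exists>k a b p q. Kc \<phi> d = Some k \<and> Kc Umin d = Some a \<and> Kc Umax d = Some b
      \<and> length p = a \<and> length q = b \<and> k \<le> length (c p q) + C"
proof -
  have bij: "bij rho" using cp unfolding computable_poset_def by auto
  obtain g where Ug: "Umin = maxD (\<lambda>x y. lt y x) g" and g: "pc_str_nat rho g" "mono_incr (\<lambda>x y. lt y x) g"
    using o3 unfolding optimal_in_def MaxPR_def by blast
  obtain f where Uf: "Umax = maxD lt f" and f: "pc_str_nat rho f" "mono_incr lt f"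
    using o2 unfolding optimal_in_def MaxPR_def by blast
  obtain \<psi> where pc: "pc_str rho \<psi>"
    and corr: "\<forall>p q d. maxD (\<lambda>x y. lt y x) g p = Some d \<longrightarrow> maxD lt f q = Some d \<longrightarrow> \<psi> (c p q) = Some d"
    using core[OF cp tc ci g f] by blast
  have "\<psi> \<in> PC rho" using pc unfolding PC_def by simp
  then obtain C where C: "\<forall>d k. Kc \<psi> d = Some k \<longrightarrow> (\<exists>k'. Kc \<phi> d = Some k' \<and> k' \<le> k + C)"
    using o1 unfolding optimal_in_def by blast
  have "\<exists>k a b p q. Kc \<phi> d = Some k \<and> Kc Umin d = Some a \<and> Kc Umax d = Some b
      \<and> length p = a \<and> length q = b \<and> k \<le> length (c p q) + C" for d
  proof -
    from Kc_opt_defined[OF bij o3, where d=d] obtain a where a: "Kc Umin d = Some a" by (elim exE)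
    from Kc_opt_defined[OF bij o2, where d=d] obtain b where b: "Kc Umax d = Some b" by (elim exE)
    from Kc_wit[OF a] obtain p where p: "Umin p = Some d" "length p = a" by (elim exE conjE)
    from Kc_wit[OF b] obtain q where q: "Umax q = Some d" "length q = b" by (elim exE conjE)
    have pg: "maxD (\<lambda>x y. lt y x) g p = Some d" using p(1) Ug by simp
    have qf: "maxD lt f q = Some d" using q(1) Uf by simp
    have "\<psi> (c p q) = Some d" by (rule corr[rule_format, OF pg qf])
    from Kc_le[of \<psi> "c p q" d, OF this] obtain k1 where k1: "Kc \<psi> d = Some k1" "k1 \<le> length (c p q)" by (elim exE conjE)
    from C[rule_format, OF k1(1)] obtain k where k: "Kc \<phi> d = Some k" "k \<le> k1 + C" by (elim exE conjE)
    then show ?thesis using a b p q k1 by (intro exI[of _ k] exI[of _ a] exI[of _ b] exI[of _ p] exI[of _ q]) simp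
  qed
  then show ?thesis by blast
qed

theorem mainTheorem4:
  fixes lt :: "'d \<Rightarrow> 'd \<Rightarrow> bool" and rho :: "nat \<Rightarrow> 'd"
    and c :: "bool list \<Rightarrow> bool list \<Rightarrow> bool list"
    and J :: "nat \<Rightarrow> nat \<Rightarrow> nat" and M :: nat
    and \<phi> Umax Umin :: "bool list \<Rightarrow> 'd option"
  assumes "computable_poset lt rho"
    and "total_computable2 c"
    and "\<forall>p q p' q'. c p q = c p' q' \<longrightarrow> p = p' \<and> q = q'"
    and "\<forall>p q. length (c p q) \<le> J (length p) (length q) + M"
    and "optimal_in (PC rho) \<phi>"
    and "optimal_in (MaxPR lt rho) Umax"
    and "optimal_in (MaxPR (\<lambda>x y. lt y x) rho) Umin"
  shows "(\<exists>C. \<forall>d. \<exists>k a b. Kc \<phi> d = Some k \<and> Kc Umin d = Some a \<and> Kc Umax d = Some b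
                        \<and> k \<le> J a b + C)
       \<and> (\<exists>C::real. \<forall>d. \<exists>k a b. Kc \<phi> d = Some k \<and> Kc Umin d = Some a \<and> Kc Umax d = Some b
                        \<and> real k \<le> (real b + logz b) + (real a + logz a) + C)"
proof
  obtain C where C: "\<forall>d. \<exists>k a b p q. Kc \<phi> d = Some k \<and> Kc Umin d = Some a \<and> Kc Umax d = Some b
      \<and> length p = a \<and> length q = b \<and> k \<le> length (c p q) + C"
    using key_bound[OF assms(1,2,3,5,6,7)] by blast
  have "\<forall>d. \<exists>k a b. Kc \<phi> d = Some k \<and> Kc Umin d = Some a \<and> Kc Umax d = Some b \<and> k \<le> J a b + (M + C)"
  proof
    fix d
    from C obtain k a b p q where h: "Kc \<phi> d = Some k" "Kc Umin d = Some a" "Kc Umax d = Some b"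
      "length p = a" "length q = b" "k \<le> length (c p q) + C" by blast
    have "length (c p q) \<le> J a b + M" using assms(4) h(4,5) by blast
    then show "\<exists>k a b. Kc \<phi> d = Some k \<and> Kc Umin d = Some a \<and> Kc Umax d = Some b \<and> k \<le> J a b + (M + C)"
      using h by (intro exI[of _ k] exI[of _ a] exI[of _ b]) simp
  qed
  then show "\<exists>C. \<forall>d. \<exists>k a b. Kc \<phi> d = Some k \<and> Kc Umin d = Some a \<and> Kc Umax d = Some b \<and> k \<le> J a b + C"
    by blast
next
  have ci0: "\<forall>p q p' q'. c0 p q = c0 p' q' \<longrightarrow> p = p' \<and> q = q'" using c0_inj by blast
  obtain C where C: "\<forall>d. \<exists>k a b p q. Kc \<phi> d = Some k \<and> Kc Umin d = Some a \<and> Kc Umax d = Some b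
      \<and> length p = a \<and> length q = b \<and> k \<le> length (c0 p q) + C"
    using key_bound[OF assms(1) tc_c0 ci0 assms(5,6,7)] by blast
  have "\<forall>d. \<exists>k a b. Kc \<phi> d = Some k \<and> Kc Umin d = Some a \<and> Kc Umax d = Some b
      \<and> real k \<le> (real b + logz b) + (real a + logz a) + (real C + 4)"
  proof
    fix d
    from C obtain k a b p q where h: "Kc \<phi> d = Some k" "Kc Umin d = Some a" "Kc Umax d = Some b"
      "length p = a" "length q = b" "k \<le> length (c0 p q) + C" by blast
    have "length (c0 p q) = 2 + 2 * length (dec (min a b)) + a + b" using c0_length h(4,5) by simp
    then have "real k \<le> real (2 + 2 * length (dec (min a b)) + a + b) + real C" using h(6) by simp
    also have "\<dots> \<le> (real b + logz b) + (real a + logz a) + 4 + real C" using log_bound[of a b] by simp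
    finally have "real k \<le> (real b + logz b) + (real a + logz a) + (real C + 4)" by simp
    then show "\<exists>k a b. Kc \<phi> d = Some k \<and> Kc Umin d = Some a \<and> Kc Umax d = Some b
      \<and> real k \<le> (real b + logz b) + (real a + logz a) + (real C + 4)"
      using h by (intro exI[of _ k] exI[of _ a] exI[of _ b]) simp
  qed
  then show "\<exists>C::real. \<forall>d. \<exists>k a b. Kc \<phi> d = Some k \<and> Kc Umin d = Some a \<and> Kc Umax d = Some b
                        \<and> real k \<le> (real b + logz b) + (real a + logz a) + C" by blast
qed


end
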